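(* For any wall $W$ in a reflection domain $\Omega$, we have $\mathbf{Hc}_+(W)^* = \mathbf{Hc}_-(W^* )$, where $\mathbf{Hc}_\pm$ denotes the positive/negative half-cone and ${}^*$ denotes the dual domain (on the left) and the dual wall (on the right).
   Context: Let $(C,S)$ be an infinite irreducible right-angled Coxeter system, $V=\mathbb{R}^{|S|}$, and $\rho\colon C\to \mathrm{SL}^{\pm}(V)$ a simplicial representation (each generator $s$ acts by the reflection $\mathrm{id}-v_s\otimes\alpha_s$, with $\alpha_s(v_t)$ the entries of a nonsingular Cartan matrix), so that the dual representation $\rho^*$ on $V^*$ is again simplicial. Let $\tilde\Delta=\{x\in V:\alpha_s(x)\le 0\ \forall s\in S\}$. A reflection domain $\Omega$ is a $\rho$-invariant nonempty convex domain contained in the Vinberg domain (projectivized interior of $\bigcup_{\gamma}\rho(\gamma)\tilde\Delta$); it is the projectivization of an invariant convex cone $\tilde\Omega$, and we set $\tilde\Delta_\Omega=\tilde\Delta\cap\tilde\Omega$. The dual domain of a properly convex domain $\Omega$ is the projectivization $\Omega^*\subset\mathbb{P}(V^* )$ of $\tilde\Omega^*=\{w\in V^*: w(x)<0\ \forall x\in\overline{\tilde\Omega}\setminus\{0\}\}$; $\Omega^*$ is a reflection domain for $\rho^*$. A wall $W$ in $\Omega$ is the fixed-point set in $\Omega$ of a reflection $\rho(\gamma)=\mathrm{id}-v\otimes\alpha$ ($\gamma\in C$ a reflection, $\alpha(v)=2$), with signs normalized so that $\alpha\le 0$ on $\tilde\Delta_\Omega$; $v$ is its polar. The positive half-cone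 $\mathbf{Hc}_+(W)$ is the projectivization of the interior of the convex hull of $\ker(\alpha)\cap\tilde\Omega$ and $v$; the negative half-cone $\mathbf{Hc}_-(W)$ is defined the same way with $v$ replaced by $-v$. The dual wall $W^*$ is the wall in $\Omega^*$ fixed by the reflection $\rho^*(\gamma)$, and half-cones over walls in $\Omega^*$ are defined in the same way for the simplicial representation $\rho^*$ (with the roles of $v_s$ and $\alpha_s$ exchanged). Half-cones are properly convex domains, so their duals $\mathbf{Hc}_\pm(W)^*\subset\mathbb{P}(V^* )$ are defined. *)

theory Defs
  imports "HOL-Analysis.Analysis"
begin

text \<open>The generating set S is a finite type 's; V = real^'s.
  Linear functionals on V (elements of V^*) are also represented by vectors in real^'s,
  via the pairing w(x) = w \<bullet> x.  Matrices act on the left via *v.\<close>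

definition outer :: "real^'n \<Rightarrow> real^'n \<Rightarrow> real^'n^'n" where
  "outer v a = (\<chi> i j. v $ i * a $ j)"

definition refl_mat :: "real^'n \<Rightarrow> real^'n \<Rightarrow> real^'n^'n" where
  "refl_mat v a = mat 1 - outer v a"

definition cartan :: "('s \<Rightarrow> real^'s) \<Rightarrow> ('s \<Rightarrow> real^'s) \<Rightarrow> 's \<Rightarrow> 's \<Rightarrow> real" where
  "cartan vs al s t = al s \<bullet> vs t"

text \<open>(vs, al) defines a simplicial representation of the right-angled Coxeter system whose
  Coxeter matrix is m_st = 2 if A_st = 0 and m_st = \<infinity> otherwise (s \<noteq> t):
  Vinberg's conditions for a right-angled Coxeter system, plus nonsingularity.\<close>
definition simplicial_ra :: "('s::finite \<Rightarrow> real^'s) \<Rightarrow> ('s \<Rightarrow> real^'s) \<Rightarrow> bool" where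
  "simplicial_ra vs al \<longleftrightarrow>
     (\<forall>s. cartan vs al s s = 2) \<and>
     (\<forall>s t. s \<noteq> t \<longrightarrow> cartan vs al s t \<le> 0) \<and>
     (\<forall>s t. cartan vs al s t = 0 \<longleftrightarrow> cartan vs al t s = 0) \<and>
     (\<forall>s t. s \<noteq> t \<and> cartan vs al s t \<noteq> 0 \<longrightarrow> cartan vs al s t * cartan vs al t s \<ge> 4) \<and>
     det (\<chi> s t. cartan vs al s t) \<noteq> 0"

text \<open>Irreducibility of the right-angled Coxeter system: its Coxeter graph (edges where
  m_st = \<infinity>, i.e. A_st \<noteq> 0) is connected.\<close>
definition irreducible_ra :: "('s::finite \<Rightarrow> real^'s) \<Rightarrow> ('s \<Rightarrow> real^'s) \<Rightarrow> bool" where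
  "irreducible_ra vs al \<longleftrightarrow> {(s, t). s \<noteq> t \<and> cartan vs al s t \<noteq> 0}\<^sup>* = UNIV"

inductive_set rho_group :: "('s::finite \<Rightarrow> real^'s) \<Rightarrow> ('s \<Rightarrow> real^'s) \<Rightarrow> (real^'s^'s) set"
  for vs al where
  one: "mat 1 \<in> rho_group vs al"
| gen: "g \<in> rho_group vs al \<Longrightarrow> refl_mat (vs s) (al s) ** g \<in> rho_group vs al"

definition rho_reflections :: "('s::finite \<Rightarrow> real^'s) \<Rightarrow> ('s \<Rightarrow> real^'s) \<Rightarrow> (real^'s^'s) set" where
  "rho_reflections vs al =
     {g ** refl_mat (vs s) (al s) ** matrix_inv g | g s. g \<in> rho_group vs al}"

definition dual_mat :: "real^'n^'n \<Rightarrow> real^'n^'n" where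
  "dual_mat g = transpose (matrix_inv g)"

definition chamber :: "('s::finite \<Rightarrow> real^'s) \<Rightarrow> (real^'s) set" where
  "chamber al = {x. \<forall>s. al s \<bullet> x \<le> 0}"

text \<open>The Vinberg cone (its projectivization is the Vinberg domain).\<close>
definition vinberg_cone :: "('s::finite \<Rightarrow> real^'s) \<Rightarrow> ('s \<Rightarrow> real^'s) \<Rightarrow> (real^'s) set" where
  "vinberg_cone vs al = interior (\<Union>g\<in>rho_group vs al. (\<lambda>x. g *v x) ` chamber al)"

text \<open>An open convex cone not containing 0 (the lift of a convex domain of projective space).\<close>
definition open_convex_cone :: "('a::real_normed_vector) set \<Rightarrow> bool" where
  "open_convex_cone K \<longleftrightarrow> open K \<and> convex K \<and> K \<noteq> {} \<and> 0 \<notin> K \<and>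
     (\<forall>x\<in>K. \<forall>t>0. t *\<^sub>R x \<in> K)"

text \<open>Reflection domain, given through its lifted cone tilde-Omega inside the Vinberg cone.\<close>
definition reflection_domain :: "('s::finite \<Rightarrow> real^'s) \<Rightarrow> ('s \<Rightarrow> real^'s) \<Rightarrow> (real^'s) set \<Rightarrow> bool" where
  "reflection_domain vs al K \<longleftrightarrow> open_convex_cone K \<and> K \<subseteq> vinberg_cone vs al \<and>
     (\<forall>g\<in>rho_group vs al. (\<lambda>x. g *v x) ` K \<subseteq> K)"

definition dual_cone :: "(real^'n) set \<Rightarrow> (real^'n) set" where
  "dual_cone K = {w. \<forall>x \<in> closure K - {0}. w \<bullet> x < 0}"

definition cone_over :: "(real^'n) set \<Rightarrow> (real^'n) set" where
  "cone_over A = {t *\<^sub>R x | t x. t > 0 \<and> x \<in> A \<and> x \<noteq> 0}"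

text \<open>Positive / negative half-cone (lifted) over the wall with polar p and functional f,
  in the domain with lifted cone K.\<close>
definition half_cone_pos :: "(real^'n) set \<Rightarrow> real^'n \<Rightarrow> real^'n \<Rightarrow> (real^'n) set" where
  "half_cone_pos K p f = cone_over (interior (convex hull (insert p {x\<in>K. f \<bullet> x = 0})))"

definition half_cone_neg :: "(real^'n) set \<Rightarrow> real^'n \<Rightarrow> real^'n \<Rightarrow> (real^'n) set" where
  "half_cone_neg K p f = cone_over (interior (convex hull (insert (- p) {x\<in>K. f \<bullet> x = 0})))"

end

theory Submission
  imports Defs
begin


lemma outer_mv: "outer v a *v x = (a \<bullet> x) *\<^sub>R (v::real^'n)"
  unfolding outer_def matrix_vector_mult_def inner_vec_def
  by (simp add: vec_eq_iff sum_distrib_left algebra_simps)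

lemma vm_outer: "x v* outer v a = (x \<bullet> v) *\<^sub>R (a::real^'n)"
  unfolding outer_def vector_matrix_mult_def inner_vec_def
  by (simp add: vec_eq_iff sum_distrib_left algebra_simps)

lemma refl_mv: "refl_mat v a *v x = x - (a \<bullet> x) *\<^sub>R (v::real^'n)"
  by (simp add: refl_mat_def matrix_vector_mult_diff_rdistrib outer_mv)

lemma refl_vm: "x v* refl_mat v a = x - (x \<bullet> v) *\<^sub>R (a::real^'n)"
  by (simp add: refl_mat_def vector_matrix_mult_diff_rdistrib vm_outer)

lemma refl_invol: "a \<bullet> v = 2 \<Longrightarrow> refl_mat v a ** refl_mat v a = mat 1"
  unfolding matrix_eq
  by (simp add: matrix_vector_mul_assoc[symmetric] refl_mv inner_diff_right vec_eq_iff algebra_simps)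

lemma transpose_refl: "transpose (refl_mat v a) = refl_mat a (v::real^'n)"
  unfolding refl_mat_def outer_def transpose_def
  by (simp add: vec_eq_iff mat_def)

lemma conj_outer: "A ** outer v a ** B = outer (A *v v) (a v* B)" for A B :: "real^'n^'n"
  unfolding matrix_eq
  by (simp add: matrix_vector_mul_assoc[symmetric] outer_mv dot_lmul_matrix matrix_vector_mult_scaleR vec_eq_iff)

lemma matrix_inv_eq: fixes A B :: "real^'n^'n"
  assumes "A ** B = mat 1" "B ** A = mat 1" shows "matrix_inv A = B"
proof -
  have ex: "\<exists>A'. A ** A' = mat 1 \<and> A' ** A = mat 1" using assms by blast
  define C where "C = matrix_inv A"
  have C: "A ** C = mat 1" "C ** A = mat 1"
    using someI_ex[OF ex] unfolding C_def matrix_inv_def by auto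
  have "C = C ** (A ** B)" using assms by simp
  also have "\<dots> = B" using C by (simp add: matrix_mul_assoc)
  finally show ?thesis unfolding C_def .
qed

lemma sra_swap: "simplicial_ra vs al \<Longrightarrow> simplicial_ra al vs"
proof -
  assume a: "simplicial_ra vs al"
  have c: "cartan al vs s t = cartan vs al t s" for s t
    by (simp add: cartan_def inner_commute)
  have "(\<chi> s t. cartan al vs s t) = transpose (\<chi> s t. cartan vs al s t)"
    by (simp add: c transpose_def vec_eq_iff)
  then have d: "det (\<chi> s t. cartan al vs s t) = det (\<chi> s t. cartan vs al s t)"
    by (metis det_transpose)
  show ?thesis using a unfolding simplicial_ra_def d
    unfolding c by (metis mult.commute)
qed

definition cone_of :: "('s::finite \<Rightarrow> real^'n) \<Rightarrow> (real^'n) set" where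
  "cone_of f = {y. \<exists>c. (\<forall>t. 0 \<le> c t) \<and> y = (\<Sum>t\<in>UNIV. c t *\<^sub>R f t)}"

lemma cone_add: "x \<in> cone_of f \<Longrightarrow> y \<in> cone_of f \<Longrightarrow> x + y \<in> cone_of f"
  unfolding cone_of_def
  apply clarify
  subgoal for c d
    by (rule exI[of _ "\<lambda>t. c t + d t"]) (simp add: sum.distrib scaleR_add_left)
  done

lemma cone_scale: "x \<in> cone_of f \<Longrightarrow> 0 \<le> k \<Longrightarrow> k *\<^sub>R x \<in> cone_of f"
  unfolding cone_of_def
  apply clarify
  subgoal for c
    by (rule exI[of _ "\<lambda>t. k * c t"]) (simp add: scaleR_sum_right)
  done

lemma cone_gen: "f t \<in> cone_of f"
proof -
  have "(\<Sum>u\<in>UNIV. (if u = t then 1 else 0) *\<^sub>R f u) = (\<Sum>u\<in>UNIV. if u = t then f u else 0)"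
    by (rule sum.cong) auto
  also have "\<dots> = f t" by simp
  finally show ?thesis unfolding cone_of_def
    by (intro CollectI exI[of _ "\<lambda>u. if u = t then 1 else 0"]) auto
qed

lemma cone_zero: "0 \<in> cone_of f"
  unfolding cone_of_def by (rule CollectI, rule exI[of _ "\<lambda>u. 0"]) simp

lemma cone_chamber: "b \<in> cone_of al \<Longrightarrow> x \<in> chamber al \<Longrightarrow> b \<bullet> x \<le> 0"
  unfolding cone_of_def chamber_def
  by (auto simp: inner_sum_left intro!: sum_nonpos mult_nonneg_nonpos)


fun nadj :: "'a list \<Rightarrow> bool" where
  "nadj (x # y # zs) = (x \<noteq> y \<and> nadj (y # zs))"
| "nadj _ = True"

fun altw :: "'a \<Rightarrow> 'a \<Rightarrow> 'a list \<Rightarrow> bool" where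
  "altw p q [] = True"
| "altw p q (z # zs) = (z = p \<and> altw q p zs)"

lemma not_nadj: "\<not> nadj ws \<Longrightarrow> \<exists>A z B. ws = A @ z # z # B"
proof (induction ws rule: nadj.induct)
  case (1 x y zs)
  show ?case
  proof (cases "x = y")
    case True then show ?thesis by (intro exI[of _ "[]"]) auto
  next
    case False
    then have "\<not> nadj (y # zs)" using 1(2) by simp
    then obtain A z B where "y # zs = A @ z # z # B" using 1(1) False by blast
    then show ?thesis by (intro exI[of _ "x # A"]) auto
  qed
qed auto

lemma nadj_altw: "set ws \<subseteq> {p,q} \<Longrightarrow> p \<noteq> q \<Longrightarrow> nadj ws \<Longrightarrow> (ws \<noteq> [] \<longrightarrow> hd ws = p) \<Longrightarrow> altw p q ws"
proof (induction ws arbitrary: p q)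
  case Nil then show ?case by simp
next
  case (Cons z zs)
  have zp: "z = p" using Cons by simp
  have "altw q p zs"
  proof (cases zs)
    case Nil then show ?thesis by simp
  next
    case (Cons y ys)
    have "y \<noteq> z" "nadj zs" using Cons \<open>nadj (z # zs)\<close> by auto
    then have "y = q" using \<open>set (z # zs) \<subseteq> {p,q}\<close> zp Cons by auto
    then show ?thesis using Cons.IH[of q p] \<open>set (z # zs) \<subseteq> {p,q}\<close> \<open>p \<noteq> q\<close> \<open>nadj zs\<close> Cons by auto
  qed
  then show ?case using zp by simp
qed

locale cox =
  fixes vs al :: "'s::finite \<Rightarrow> real^'s"
  assumes sra: "simplicial_ra vs al"
begin

definition r :: "'s \<Rightarrow> real^'s^'s" where "r s = refl_mat (vs s) (al s)"

definition pw :: "'s list \<Rightarrow> real^'s^'s" where "pw ws = foldr (\<lambda>s M. r s ** M) ws (mat 1)"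

lemma pw_Nil[simp]: "pw [] = mat 1" by (simp add: pw_def)
lemma pw_Cons[simp]: "pw (s # ws) = r s ** pw ws" by (simp add: pw_def)

lemma pw_append: "pw (xs @ ys) = pw xs ** pw ys"
  by (induction xs) (simp_all add: matrix_mul_assoc)

lemma diag2: "al s \<bullet> vs s = 2"
proof -
  have "\<forall>s. cartan vs al s s = 2" using sra unfolding simplicial_ra_def by (rule conjunct1)
  then show ?thesis unfolding cartan_def by simp
qed

lemma r_invol[simp]: "r s ** r s = mat 1"
  unfolding r_def by (rule refl_invol[OF diag2])

lemma r_invol2[simp]: "r s ** (r s ** M) = M"
  by (simp add: matrix_mul_assoc)

lemma pw_rev1: "pw (rev ws) ** pw ws = mat 1"
  by (induction ws) (simp_all add: pw_append matrix_mul_assoc[symmetric])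

lemma pw_rev2: "pw ws ** pw (rev ws) = mat 1"
proof (induction ws)
  case (Cons s ws)
  have "pw (s # ws) ** pw (rev (s # ws)) = r s ** (pw ws ** pw (rev ws)) ** r s"
    by (simp add: pw_append matrix_mul_assoc)
  then show ?case using Cons by simp
qed simp

lemma pw_rev_cancel: "pw (rev xs) = pw (rev ys) \<Longrightarrow> pw xs = pw ys"
proof -
  assume h: "pw (rev xs) = pw (rev ys)"
  have "pw xs = pw xs ** (pw (rev ys) ** pw ys)" by (simp add: pw_rev1)
  also have "\<dots> = (pw xs ** pw (rev xs)) ** pw ys" by (simp add: h matrix_mul_assoc)
  also have "\<dots> = pw ys" by (simp add: pw_rev2)
  finally show ?thesis .
qed

lemma group_eq: "rho_group vs al = range pw"
proof
  show "rho_group vs al \<subseteq> range pw"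
  proof
    fix g assume "g \<in> rho_group vs al"
    then show "g \<in> range pw"
    proof induction
      case one then show ?case by (metis pw_Nil rangeI)
    next
      case (gen g s)
      then obtain ws where "g = pw ws" by auto
      then show ?case by (metis pw_Cons r_def rangeI)
    qed
  qed
next
  show "range pw \<subseteq> rho_group vs al"
  proof
    fix g assume "g \<in> range pw"
    then obtain ws where "g = pw ws" by auto
    then show "g \<in> rho_group vs al"
      by (induction ws arbitrary: g) (auto simp: r_def intro: rho_group.intros)
  qed
qed

definition L :: "real^'s^'s \<Rightarrow> nat" where
  "L g = (LEAST n. \<exists>ws. length ws = n \<and> pw ws = g)"

lemma L_le: "pw ws' = g \<Longrightarrow> L g \<le> length ws'"
  unfolding L_def by (rule Least_le) blast

lemma L_ex: "\<exists>ws'. length ws' = L (pw ws) \<and> pw ws' = pw ws"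
  unfolding L_def by (rule LeastI_ex) blast

lemma L_mult: "L (pw xs ** pw ys) \<le> L (pw xs) + L (pw ys)"
proof -
  obtain xs' where x: "length xs' = L (pw xs)" "pw xs' = pw xs" using L_ex by blast
  obtain ys' where y: "length ys' = L (pw ys)" "pw ys' = pw ys" using L_ex by blast
  have "pw (xs' @ ys') = pw xs ** pw ys" using x y by (simp add: pw_append)
  then show ?thesis using L_le[of "xs' @ ys'"] x y by simp
qed

definition LI :: "'s \<Rightarrow> 's \<Rightarrow> real^'s^'s \<Rightarrow> nat" where
  "LI s t g = (LEAST n. \<exists>ws. set ws \<subseteq> {s,t} \<and> length ws = n \<and> pw ws = g)"

lemma LI_le: "set ws' \<subseteq> {s,t} \<Longrightarrow> pw ws' = g \<Longrightarrow> LI s t g \<le> length ws'"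
  unfolding LI_def by (rule Least_le) blast

lemma LI_ex: "set ws \<subseteq> {s,t} \<Longrightarrow> \<exists>ws'. set ws' \<subseteq> {s,t} \<and> length ws' = LI s t (pw ws) \<and> pw ws' = pw ws"
  unfolding LI_def by (rule LeastI_ex) blast

lemma L_le_LI: "set ws \<subseteq> {s,t} \<Longrightarrow> L (pw ws) \<le> LI s t (pw ws)"
proof -
  assume "set ws \<subseteq> {s,t}"
  then obtain ws' where "length ws' = LI s t (pw ws)" "pw ws' = pw ws" using LI_ex by blast
  then show ?thesis using L_le[of ws' "pw ws"] by simp
qed

lemma LI_snoc: "set ws \<subseteq> {s,t} \<Longrightarrow> x \<in> {s,t} \<Longrightarrow> LI s t (pw (ws @ [x])) \<le> LI s t (pw ws) + 1"
proof -
  assume a: "set ws \<subseteq> {s,t}" "x \<in> {s,t}"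
  obtain ws' where w: "set ws' \<subseteq> {s,t}" "length ws' = LI s t (pw ws)" "pw ws' = pw ws"
    using LI_ex[OF a(1)] by blast
  have "pw (ws' @ [x]) = pw (ws @ [x])" using w by (simp add: pw_append)
  then show ?thesis using LI_le[of "ws' @ [x]" s t] w a by simp
qed

lemma LI_cons: "set ws \<subseteq> {s,t} \<Longrightarrow> x \<in> {s,t} \<Longrightarrow> LI s t (pw (x # ws)) \<le> LI s t (pw ws) + 1"
proof -
  assume a: "set ws \<subseteq> {s,t}" "x \<in> {s,t}"
  obtain ws' where w: "set ws' \<subseteq> {s,t}" "length ws' = LI s t (pw ws)" "pw ws' = pw ws"
    using LI_ex[OF a(1)] by blast
  have "pw (x # ws') = pw (x # ws)" using w by simp
  then show ?thesis using LI_le[of "x # ws'" s t] w a by simp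
qed

end


context cox begin

lemma cartan_props:
  "s \<noteq> t \<Longrightarrow> cartan vs al s t \<le> 0"
  "cartan vs al s t = 0 \<longleftrightarrow> cartan vs al t s = 0"
  "s \<noteq> t \<Longrightarrow> cartan vs al s t \<noteq> 0 \<Longrightarrow> cartan vs al s t * cartan vs al t s \<ge> 4"
proof -
  have h: "(\<forall>s t. s \<noteq> t \<longrightarrow> cartan vs al s t \<le> 0) \<and>
     (\<forall>s t. cartan vs al s t = 0 \<longleftrightarrow> cartan vs al t s = 0) \<and>
     (\<forall>s t. s \<noteq> t \<and> cartan vs al s t \<noteq> 0 \<longrightarrow> cartan vs al s t * cartan vs al t s \<ge> 4)"
    using sra unfolding simplicial_ra_def by (elim conjE) (intro conjI; assumption)
  then show "s \<noteq> t \<Longrightarrow> cartan vs al s t \<le> 0"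
    "cartan vs al s t = 0 \<longleftrightarrow> cartan vs al t s = 0"
    "s \<noteq> t \<Longrightarrow> cartan vs al s t \<noteq> 0 \<Longrightarrow> cartan vs al s t * cartan vs al t s \<ge> 4"
    by auto
qed

lemma r_vm: "x v* r s = x - (x \<bullet> vs s) *\<^sub>R al s"
  unfolding r_def by (rule refl_vm)

lemma r_mv: "r s *v x = x - (al s \<bullet> x) *\<^sub>R vs s"
  unfolding r_def by (rule refl_mv)

lemma alt_pos:
  assumes "cartan vs al p q * cartan vs al q p \<ge> 4" "cartan vs al p q \<le> 0" "cartan vs al q p \<le> 0"
    and "altw p q ws" "0 \<le> x" "0 \<le> y" "- cartan vs al p q * y \<le> 2 * x"
  shows "\<exists>x' y'. 0 \<le> x' \<and> 0 \<le> y' \<and> (x *\<^sub>R al q + y *\<^sub>R al p) v* pw ws = x' *\<^sub>R al q + y' *\<^sub>R al p"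
  using assms
proof (induction ws arbitrary: p q x y)
  case Nil
  then show ?case by (intro exI[of _ x] exI[of _ y]) simp
next
  case (Cons z zs)
  have zp: "z = p" and alt: "altw q p zs" using Cons.prems(4) by auto
  define B where "B = - cartan vs al q p"
  define C where "C = - cartan vs al p q"
  have B0: "0 \<le> B" and C0: "0 \<le> C" and BC: "4 \<le> B * C"
    using Cons.prems(1-3) by (auto simp: B_def C_def mult.commute)
  have x0: "0 \<le> x" and y0: "0 \<le> y" and Cy: "C * y \<le> 2 * x" using Cons.prems(5-7) by (auto simp: C_def)
  have "B * (C * y) \<le> B * (2 * x)" using Cy B0 by (rule mult_left_mono)
  moreover have "4 * y \<le> (B * C) * y" using BC y0 by (rule mult_right_mono)
  ultimately have y2: "2 * y \<le> B * x" by (simp add: algebra_simps)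
  define y1 where "y1 = B * x - y"
  have y10: "0 \<le> y1" using y2 y0 by (simp add: y1_def)
  have y1c': "B * x \<le> 2 * y1" using y2 by (simp add: y1_def algebra_simps)
  have y1c: "- cartan vs al q p * x \<le> 2 * y1" using y1c' by (simp only: B_def)
  have step: "(x *\<^sub>R al q + y *\<^sub>R al p) v* r p = y1 *\<^sub>R al p + x *\<^sub>R al q"
  proof -
    have i: "(x *\<^sub>R al q + y *\<^sub>R al p) \<bullet> vs p = x * cartan vs al q p + 2 * y"
      using diag2[of p] by (simp add: inner_add_left cartan_def)
    show ?thesis unfolding r_vm i y1_def B_def
      by (simp add: vec_eq_iff algebra_simps)
  qed
  obtain x'' y'' where h: "0 \<le> x''" "0 \<le> y''"
    "(y1 *\<^sub>R al p + x *\<^sub>R al q) v* pw zs = x'' *\<^sub>R al p + y'' *\<^sub>R al q"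
    using Cons.IH[of q p y1 x] Cons.prems(1-3) alt y10 x0 y1c by (auto simp: mult.commute)
  have "(x *\<^sub>R al q + y *\<^sub>R al p) v* pw (z # zs) = ((x *\<^sub>R al q + y *\<^sub>R al p) v* r p) v* pw zs"
    by (simp add: zp vector_matrix_mul_assoc)
  also have "\<dots> = y'' *\<^sub>R al q + x'' *\<^sub>R al p" using step h by simp
  finally show ?case using h by blast
qed

lemma r_commute: "al s \<bullet> vs t = 0 \<Longrightarrow> al t \<bullet> vs s = 0 \<Longrightarrow> r s ** r t = r t ** r s"
  unfolding matrix_eq
  by (simp add: matrix_vector_mul_assoc[symmetric] r_mv inner_diff_right vec_eq_iff algebra_simps)

lemma dihedral:
  assumes st: "s \<noteq> t" and ws: "set ws \<subseteq> {s,t}"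
    and nd: "\<not> LI s t (r s ** pw ws) < LI s t (pw ws)"
  shows "\<exists>x y. 0 \<le> x \<and> 0 \<le> y \<and> al s v* pw ws = x *\<^sub>R al s + y *\<^sub>R al t"
proof -
  obtain ws0 where w0: "set ws0 \<subseteq> {s,t}" "length ws0 = LI s t (pw ws)" "pw ws0 = pw ws"
    using LI_ex[OF ws] by blast
  have red: "length ws0 \<le> length ws'" if "set ws' \<subseteq> {s,t}" "pw ws' = pw ws0" for ws'
    using LI_le[OF that] w0 by simp
  have nadj0: "nadj ws0"
  proof (rule ccontr)
    assume "\<not> nadj ws0"
    then obtain A z B where e: "ws0 = A @ z # z # B" using not_nadj by blast
    have "pw (A @ B) = pw ws0" by (simp add: e pw_append matrix_mul_assoc)
    moreover have "set (A @ B) \<subseteq> {s,t}" using w0(1) e by auto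
    ultimately have "length ws0 \<le> length (A @ B)" using red by blast
    then show False using e by simp
  qed
  have hd0: "ws0 \<noteq> [] \<longrightarrow> hd ws0 = t"
  proof
    assume ne: "ws0 \<noteq> []"
    show "hd ws0 = t"
    proof (rule ccontr)
      assume "hd ws0 \<noteq> t"
      then obtain rest where e: "ws0 = s # rest" using ne w0(1)
        by (cases ws0) auto
      have "r s ** pw ws = pw rest" using w0(3)[symmetric] e by simp
      moreover have "set rest \<subseteq> {s,t}" using w0(1) e by auto
      ultimately have "LI s t (r s ** pw ws) \<le> length rest" using LI_le by metis
      then show False using nd w0(2) e by simp
    qed
  qed
  have alt: "altw t s ws0"
    using nadj_altw[of ws0 t s] w0(1) st nadj0 hd0 by auto
  show ?thesis
  proof (cases "cartan vs al s t = 0")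
    case True
    then have ts: "cartan vs al t s = 0" using cartan_props(2) by blast
    have "length ws0 < 2"
    proof (rule ccontr)
      assume "\<not> length ws0 < 2"
      then obtain rest where e: "ws0 = t # s # rest" using alt
        by (cases ws0; cases "tl ws0") auto
      have c: "r t ** r s = r s ** r t"
        using r_commute[of t s] True ts by (simp add: cartan_def)
      have "r s ** pw ws = r s ** (r t ** (r s ** pw rest))" using w0(3) e by simp
      also have "\<dots> = (r s ** (r t ** r s)) ** pw rest" by (simp add: matrix_mul_assoc)
      also have "\<dots> = pw (t # rest)" using c by (simp add: matrix_mul_assoc)
      finally have "r s ** pw ws = pw (t # rest)" .
      moreover have "set (t # rest) \<subseteq> {s,t}" using w0(1) e by auto
      ultimately have "LI s t (r s ** pw ws) \<le> length (t # rest)" using LI_le by metis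
      then show False using nd w0(2) e by simp
    qed
    then have "ws0 = [] \<or> ws0 = [t]" using alt by (cases ws0; cases "tl ws0") auto
    then have "al s v* pw ws = al s"
      using w0(3)[symmetric] True by (auto simp: r_vm cartan_def)
    then show ?thesis by (intro exI[of _ 1] exI[of _ 0]) simp
  next
    case False
    then have ts: "cartan vs al t s \<noteq> 0" using cartan_props(2) by blast
    have p4: "cartan vs al t s * cartan vs al s t \<ge> 4" using cartan_props(3)[of t s] st ts by auto
    have n1: "cartan vs al t s \<le> 0" "cartan vs al s t \<le> 0" using cartan_props(1) st by auto
    obtain x' y' where "0 \<le> x'" "0 \<le> y'" "(1 *\<^sub>R al s + 0 *\<^sub>R al t) v* pw ws0 = x' *\<^sub>R al s + y' *\<^sub>R al t"
      using alt_pos[of t s ws0 1 0] p4 n1 alt by auto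
    then show ?thesis using w0(3) by auto
  qed
qed

end


context cox begin

lemma RP_aux: "\<forall>ws s. L (pw ws) = n \<longrightarrow> L (pw ws) \<le> L (r s ** pw ws) \<longrightarrow> al s v* pw ws \<in> cone_of al"
proof (induction n rule: less_induct)
  case (less n)
  show ?case
  proof (intro allI impI)
    fix ws s assume n: "L (pw ws) = n" and hs: "L (pw ws) \<le> L (r s ** pw ws)"
    define h where "h = pw ws"
    have Lh: "L h = n" using n h_def by simp
    obtain ws1 where w1: "length ws1 = n" "pw ws1 = h" using L_ex[of ws] n h_def by auto
    show "al s v* pw ws \<in> cone_of al"
    proof (cases ws1)
      case Nil
      then have "pw ws = mat 1" using w1 h_def by simp
      then show ?thesis by (simp add: cone_gen)
    next
      case (Cons t ws2)
      have hn: "h = r t ** pw ws2" using w1 Cons by simp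
      have rth: "r t ** h = pw ws2" using hn by simp
      have n1: "n = length ws2 + 1" using w1 Cons by simp
      have Lws2: "L (pw ws2) \<le> length ws2" using L_le by blast
      have ts: "t \<noteq> s"
      proof
        assume "t = s"
        then have "L (r s ** h) \<le> length ws2" using rth L_le[of ws2 "r s ** h"] by simp
        then show False using hs n n1 h_def by simp
      qed
      have st: "s \<noteq> t" using ts by auto
      define D where "D = {m. \<exists>us hs'. set us \<subseteq> {s,t} \<and> pw us ** pw hs' = h \<and>
          n = LI s t (pw us) + L (pw hs') \<and> L (pw hs') = m}"
      have inD: "L (pw ws2) \<in> D"
      proof -
        have a1: "pw [t] ** pw ws2 = h" using hn by simp
        have a2: "L h \<le> L (pw [t]) + L (pw ws2)" using L_mult[of "[t]" ws2] a1 by simp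
        have a3: "L (pw [t]) \<le> LI s t (pw [t])" using L_le_LI[of "[t]" s t] by simp
        have a4: "LI s t (pw [t]) \<le> 1" using LI_le[of "[t]" s t "pw [t]"] by simp
        have "n = LI s t (pw [t]) + L (pw ws2)" using a2 a3 a4 Lws2 Lh n1 by linarith
        then show ?thesis unfolding D_def using a1
          by (intro CollectI exI[of _ "[t]"] exI[of _ ws2]) auto
      qed
      define m0 where "m0 = (LEAST m. m \<in> D)"
      have m0D: "m0 \<in> D" unfolding m0_def using inD by (rule LeastI)
      have m0min: "m0 \<le> m" if "m \<in> D" for m unfolding m0_def using that by (rule Least_le)
      obtain us hs' where d: "set us \<subseteq> {s,t}" "pw us ** pw hs' = h"
          "n = LI s t (pw us) + L (pw hs')" "L (pw hs') = m0"
        using m0D unfolding D_def by blast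
      have m0n: "m0 < n" using m0min[OF inD] Lws2 n1 by linarith
      have claim: "L (pw hs') \<le> L (r x ** pw hs')" if x: "x \<in> {s,t}" for x
      proof (rule ccontr)
        assume c: "\<not> ?thesis"
        have e1: "pw (us @ [x]) ** pw (x # hs') = h"
          using d(2) by (simp add: pw_append matrix_mul_assoc[symmetric])
        have e2: "L h \<le> L (pw (us @ [x])) + L (pw (x # hs'))"
          using L_mult[of "us @ [x]" "x # hs'"] e1 by simp
        have e3: "L (pw (us @ [x])) \<le> LI s t (pw (us @ [x]))"
          using L_le_LI[of "us @ [x]" s t] d(1) x by auto
        have e4: "LI s t (pw (us @ [x])) \<le> LI s t (pw us) + 1" using LI_snoc[OF d(1) x] .
        have e5: "L (pw (x # hs')) + 1 \<le> L (pw hs')" using c by simp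
        have eq: "n = LI s t (pw (us @ [x])) + L (pw (x # hs'))"
          using e2 e3 e4 e5 d(3) Lh by linarith
        have "L (pw (x # hs')) \<in> D" unfolding D_def using e1 eq d(1) x
          by (intro CollectI exI[of _ "us @ [x]"] exI[of _ "x # hs'"]) auto
        then have "m0 \<le> L (pw (x # hs'))" by (rule m0min)
        then show False using e5 d(4) by linarith
      qed
      have IHs: "al s v* pw hs' \<in> cone_of al" using less.IH[OF m0n] d(4) claim[of s] by auto
      have IHt: "al t v* pw hs' \<in> cone_of al" using less.IH[OF m0n] d(4) claim[of t] by auto
      have nd: "\<not> LI s t (r s ** pw us) < LI s t (pw us)"
      proof
        assume c: "LI s t (r s ** pw us) < LI s t (pw us)"
        have f1: "r s ** h = pw (s # us) ** pw hs'" using d(2)[symmetric] by (simp add: matrix_mul_assoc)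
        have "L (r s ** h) \<le> L (pw (s # us)) + L (pw hs')" using L_mult[of "s # us" hs'] f1 by simp
        moreover have "L (pw (s # us)) \<le> LI s t (pw (s # us))" using L_le_LI[of "s # us" s t] d(1) by auto
        ultimately have "L (r s ** h) < n" using c d(3) by simp
        then show False using hs n h_def by simp
      qed
      obtain x y where xy: "0 \<le> x" "0 \<le> y" "al s v* pw us = x *\<^sub>R al s + y *\<^sub>R al t"
        using dihedral[OF st d(1) nd] by blast
      have "al s v* pw ws = (al s v* pw us) v* pw hs'"
        using d(2) h_def by (simp add: vector_matrix_mul_assoc)
      also have "\<dots> = x *\<^sub>R (al s v* pw hs') + y *\<^sub>R (al t v* pw hs')"
        using xy by (simp add: vector_matrix_left_distrib scaleR_vector_matrix_assoc)
      finally show ?thesis using IHs IHt xy by (simp add: cone_add cone_scale)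
    qed
  qed
qed

lemma RP: "L (pw ws) \<le> L (r s ** pw ws) \<Longrightarrow> al s v* pw ws \<in> cone_of al"
  using RP_aux by blast

lemma T1_red: "length ws = L (pw ws) \<Longrightarrow> x \<in> chamber al \<Longrightarrow> pw ws *v x - x \<in> cone_of vs"
proof (induction ws)
  case Nil then show ?case by (simp add: cone_zero)
next
  case (Cons s ws)
  have red: "length ws = L (pw ws)"
  proof -
    have "L (pw ws) \<le> length ws" using L_le by blast
    moreover have "length ws \<le> L (pw ws)"
    proof (rule ccontr)
      assume c: "\<not> ?thesis"
      obtain ws' where w': "length ws' = L (pw ws)" "pw ws' = pw ws" using L_ex by blast
      then have "L (pw (s # ws)) \<le> length (s # ws')" using L_le[of "s # ws'"] by simp
      then show False using Cons.prems(1) c w' by simp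
    qed
    ultimately show ?thesis by simp
  qed
  have "L (pw ws) \<le> L (r s ** pw ws)" using Cons.prems(1) red by simp
  then have b: "al s v* pw ws \<in> cone_of al" by (rule RP)
  have le: "al s \<bullet> (pw ws *v x) \<le> 0" using cone_chamber[OF b Cons.prems(2)] by (simp add: dot_lmul_matrix)
  have eq: "pw (s # ws) *v x - x = (pw ws *v x - x) + (- (al s \<bullet> (pw ws *v x))) *\<^sub>R vs s"
    by (simp add: matrix_vector_mul_assoc[symmetric] r_mv algebra_simps)
  have m: "(- (al s \<bullet> (pw ws *v x))) *\<^sub>R vs s \<in> cone_of vs" using le by (intro cone_scale cone_gen) simp
  show ?case unfolding eq by (rule cone_add[OF Cons.IH[OF red Cons.prems(2)] m])
qed

lemma T1: "x \<in> chamber al \<Longrightarrow> pw ws *v x - x \<in> cone_of vs"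
proof -
  assume x: "x \<in> chamber al"
  obtain ws' where w': "length ws' = L (pw ws)" "pw ws' = pw ws" using L_ex by blast
  then have "length ws' = L (pw ws')" by simp
  from T1_red[OF this x] show ?thesis using w' by simp
qed

end


lemma invertible_inv: fixes A :: "real^'n^'n"
  assumes "det A \<noteq> 0" shows "A ** matrix_inv A = mat 1" "matrix_inv A ** A = mat 1"
proof -
  have "invertible A" using assms invertible_det_nz by blast
  then have ex: "\<exists>A'. A ** A' = mat 1 \<and> A' ** A = mat 1" unfolding invertible_def by blast
  show "A ** matrix_inv A = mat 1" "matrix_inv A ** A = mat 1"
    using someI_ex[OF ex] unfolding matrix_inv_def by auto
qed

context cox begin

lemma dual_cox: "cox al vs"
  by (unfold_locales) (rule sra_swap[OF sra])

lemma dual_r: "cox.r al vs s = transpose (r s)"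
  using dual_cox by (simp add: cox.r_def r_def transpose_refl)

lemma dual_pw: "cox.pw al vs ws = transpose (pw (rev ws))"
proof (induction ws)
  case Nil then show ?case using cox.pw_Nil[OF dual_cox] by simp
next
  case (Cons s ws)
  have "cox.pw al vs (s # ws) = cox.r al vs s ** cox.pw al vs ws" using cox.pw_Cons[OF dual_cox] by blast
  also have "\<dots> = transpose (r s) ** transpose (pw (rev ws))" using Cons dual_r by simp
  also have "\<dots> = transpose (pw (rev ws) ** r s)" by (simp add: matrix_transpose_mul)
  also have "\<dots> = transpose (pw (rev (s # ws)))" by (simp add: pw_append)
  finally show ?case .
qed

lemma dual_pw_eq: "cox.pw al vs xs = cox.pw al vs ys \<longleftrightarrow> pw xs = pw ys"
proof
  assume "cox.pw al vs xs = cox.pw al vs ys"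
  then have "pw (rev xs) = pw (rev ys)" unfolding dual_pw by (metis transpose_transpose)
  then show "pw xs = pw ys" by (rule pw_rev_cancel)
next
  assume "pw xs = pw ys"
  then have "pw (rev (rev xs)) = pw (rev (rev ys))" by simp
  then have "pw (rev xs) = pw (rev ys)" by (rule pw_rev_cancel)
  then show "cox.pw al vs xs = cox.pw al vs ys" unfolding dual_pw by simp
qed

lemma dual_L: "cox.L al vs (cox.pw al vs ws) = L (pw ws)"
  unfolding cox.L_def[OF dual_cox] L_def using dual_pw_eq by simp

lemma dual_RP: "L (pw ws) \<le> L (r s ** pw ws) \<Longrightarrow> pw (rev ws) *v vs s \<in> cone_of vs"
proof -
  assume a: "L (pw ws) \<le> L (r s ** pw ws)"
  have "cox.L al vs (cox.pw al vs ws) \<le> cox.L al vs (cox.r al vs s ** cox.pw al vs ws)"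
    using a dual_L[of ws] dual_L[of "s # ws"] cox.pw_Cons[OF dual_cox, of s ws] by simp
  then have "vs s v* cox.pw al vs ws \<in> cone_of vs" by (rule cox.RP[OF dual_cox])
  then show ?thesis unfolding dual_pw by (metis transpose_matrix_vector transpose_transpose)
qed

lemma dual_T1: "w \<in> chamber vs \<Longrightarrow> transpose (pw ws) *v w - w \<in> cone_of al"
proof -
  assume w: "w \<in> chamber vs"
  have "cox.pw al vs (rev ws) *v w - w \<in> cone_of al" by (rule cox.T1[OF dual_cox w])
  then show ?thesis unfolding dual_pw by simp
qed

definition Am :: "real^'s^'s" where "Am = (\<chi> s. al s)"
definition Vm :: "real^'s^'s" where "Vm = (\<chi> s. vs s)"

lemma cartan_mat: "(\<chi> s t. cartan vs al s t) = Am ** transpose Vm"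
  by (simp add: Am_def Vm_def cartan_def matrix_matrix_mult_def transpose_def inner_vec_def vec_eq_iff)

lemma det_Am: "det Am \<noteq> 0" and det_Vm: "det Vm \<noteq> 0"
proof -
  have "det (\<chi> s t. cartan vs al s t) \<noteq> 0" using sra unfolding simplicial_ra_def by (elim conjE)
  then have "det Am * det Vm \<noteq> 0" unfolding cartan_mat det_mul det_transpose .
  then show "det Am \<noteq> 0" "det Vm \<noteq> 0" by auto
qed

lemma Am_mv: "(Am *v z) $ t = al t \<bullet> z"
  by (simp add: Am_def matrix_vector_mult_def inner_vec_def)

lemma exists_neg_point: "\<exists>z. \<forall>t. al t \<bullet> z = 1"
proof -
  define z where "z = matrix_inv Am *v 1"
  have "Am *v z = 1" unfolding z_def matrix_vector_mul_assoc invertible_inv(1)[OF det_Am] by simp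
  then have "al t \<bullet> z = 1" for t using Am_mv[of z t] by simp
  then show ?thesis by blast
qed

lemma nonzero_root: "x \<noteq> 0 \<Longrightarrow> \<exists>s. al s \<bullet> x \<noteq> 0"
proof (rule ccontr)
  assume x: "x \<noteq> 0" and "\<not> (\<exists>s. al s \<bullet> x \<noteq> 0)"
  then have "Am *v x = 0" using Am_mv by (simp add: vec_eq_iff)
  then have "matrix_inv Am *v (Am *v x) = 0" by simp
  then have "x = 0" unfolding matrix_vector_mul_assoc invertible_inv(2)[OF det_Am] by simp
  then show False using x by simp
qed

lemma span_vs: "\<exists>c. x = (\<Sum>t\<in>UNIV. c t *\<^sub>R vs t)"
proof -
  have dV: "det (transpose Vm) \<noteq> 0" using det_Vm by simp
  define c where "c = matrix_inv (transpose Vm) *v x"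
  have "transpose Vm *v c = x" unfolding c_def matrix_vector_mul_assoc invertible_inv(1)[OF dV] by simp
  moreover have "transpose Vm *v c = (\<Sum>t\<in>UNIV. (c $ t) *\<^sub>R vs t)"
    by (simp add: Vm_def matrix_vector_mult_def transpose_def vec_eq_iff sum_component mult.commute)
  ultimately show ?thesis by metis
qed

end


lemma mv_axis: "(A *v axis j (1::real)) $ i = A $ i $ j"
  by (simp add: matrix_vector_mult_basis column_def)

context cox begin

lemma sum_two: "(s::'s) \<noteq> s1 \<Longrightarrow> (\<Sum>t\<in>UNIV. f t) = f s + f s1 + (\<Sum>t\<in>UNIV - {s,s1}. (f t::real))"
proof -
  assume ne: "s \<noteq> s1"
  have "(\<Sum>t\<in>UNIV. f t) = f s + (\<Sum>t\<in>UNIV - {s}. f t)" by (rule sum.remove) auto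
  also have "(\<Sum>t\<in>UNIV - {s}. f t) = f s1 + (\<Sum>t\<in>UNIV - {s} - {s1}. f t)"
    using ne by (intro sum.remove) auto
  also have "UNIV - {s} - {s1} = UNIV - {s,s1}" by auto
  finally show ?thesis by simp
qed

lemma cartan_diag: "cartan vs al s s = 2"
  using diag2 by (simp add: cartan_def)

lemma NC:
  assumes irred: "irreducible_ra vs al" and st: "(s0::'s) \<noteq> t0"
    and c0: "\<forall>t. 0 \<le> c t" and cnz: "\<exists>t. c t \<noteq> 0"
    and rows: "\<forall>u. 0 \<le> (\<Sum>t\<in>UNIV. cartan vs al u t * c t)"
  shows False
proof -
  let ?A = "cartan vs al"
  define E where "E = {(s,t). s \<noteq> t \<and> ?A s t \<noteq> 0}"
  have Eall: "(x,y) \<in> E\<^sup>*" for x y using irred unfolding irreducible_ra_def E_def by auto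
  have zprop: "c t = 0" if cs: "c s = 0" and e: "(s,t) \<in> E" for s t
  proof -
    have terms: "0 \<le> - (?A s u * c u)" for u
    proof (cases "u = s")
      case True then show ?thesis using cs by simp
    next
      case False
      then have "?A s u \<le> 0" using cartan_props(1) by auto
      then show ?thesis using c0 by (simp add: mult_nonpos_nonneg)
    qed
    have "(\<Sum>u\<in>UNIV. - (?A s u * c u)) \<le> 0" using rows by (simp add: sum_negf)
    moreover have "0 \<le> (\<Sum>u\<in>UNIV. - (?A s u * c u))" using terms by (simp add: sum_nonneg)
    ultimately have "(\<Sum>u\<in>UNIV. - (?A s u * c u)) = 0" by linarith
    moreover have "(\<Sum>u\<in>UNIV. - (?A s u * c u)) = 0 \<longleftrightarrow> (\<forall>u\<in>UNIV. - (?A s u * c u) = 0)"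
      by (rule sum_nonneg_eq_0_iff) (simp, rule terms)
    ultimately have "\<forall>u\<in>UNIV. - (?A s u * c u) = 0" by blast
    then have "?A s t * c t = 0" by simp
    then show "c t = 0" using e unfolding E_def by simp
  qed
  have pos: "0 < c u" for u
  proof (rule ccontr)
    assume "\<not> 0 < c u"
    then have cu: "c u = 0" using c0[rule_format, of u] by linarith
    have "c t = 0" for t
      using Eall[of u t]
    proof (induction rule: rtrancl_induct)
      case base then show ?case using cu .
    next
      case (step y z) then show ?case using zprop by blast
    qed
    then show False using cnz by blast
  qed
  obtain s1 where e1: "(s0, s1) \<in> E" using Eall[of s0 t0] st by (blast elim: converse_rtranclE)
  define s where "s = s0"
  have ss1: "s \<noteq> s1" and a1: "?A s s1 \<noteq> 0" using e1 by (auto simp: E_def s_def)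
  have a2: "?A s1 s \<noteq> 0" using a1 cartan_props(2) by blast
  have n1: "?A s s1 \<le> 0" "?A s1 s \<le> 0" using ss1 cartan_props(1) by auto
  have p4: "?A s s1 * ?A s1 s \<ge> 4" using cartan_props(3) ss1 a1 by blast
  define b where "b = - ?A s s1"
  define b' where "b' = - ?A s1 s"
  have bpos: "0 < b" "0 < b'" using a1 a2 n1 by (auto simp: b_def b'_def)
  have bb: "4 \<le> b' * b" using p4 by (simp add: b_def b'_def mult.commute)
  define X where "X u w = (\<Sum>t\<in>UNIV - {u,w}. ?A u t * c t)" for u w
  have Xle: "X u w \<le> 0" for u w
    unfolding X_def
  proof (rule sum_nonpos)
    fix t assume "t \<in> UNIV - {u,w}"
    then have "?A u t \<le> 0" using cartan_props(1)[of u t] by auto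
    then show "?A u t * c t \<le> 0" using c0 by (simp add: mult_nonpos_nonneg)
  qed
  have row_s: "(\<Sum>t\<in>UNIV. ?A s t * c t) = 2 * c s - b * c s1 + X s s1"
    using sum_two[OF ss1, of "\<lambda>t. ?A s t * c t"] cartan_diag[of s] by (simp add: X_def b_def)
  have row_s1: "(\<Sum>t\<in>UNIV. ?A s1 t * c t) = 2 * c s1 - b' * c s + X s1 s"
    using sum_two[of s1 s "\<lambda>t. ?A s1 t * c t"] ss1 cartan_diag[of s1] by (simp add: X_def b'_def)
  have r1: "0 \<le> 2 * c s - b * c s1 + X s s1" using rows[rule_format, of s] row_s by simp
  have r2: "0 \<le> 2 * c s1 - b' * c s + X s1 s" using rows[rule_format, of s1] row_s1 by simp
  have i1: "b * c s1 \<le> 2 * c s" using r1 Xle[of s s1] by linarith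
  have i2: "b' * c s \<le> 2 * c s1" using r2 Xle[of s1 s] by linarith
  have j1: "4 * c s1 \<le> b' * (b * c s1)"
  proof -
    have "4 * c s1 \<le> (b' * b) * c s1" using bb pos[of s1] by (intro mult_right_mono) auto
    then show ?thesis by (simp add: mult.assoc)
  qed
  have j2: "b' * (b * c s1) \<le> 2 * (b' * c s)"
  proof -
    have "b' * (b * c s1) \<le> b' * (2 * c s)" using i1 bpos by (intro mult_left_mono) auto
    then show ?thesis by (simp add: algebra_simps)
  qed
  have j3: "2 * (b' * c s) \<le> 4 * c s1" using i2 by simp
  have eq1: "b' * (b * c s1) = 2 * (b' * c s)" using j1 j2 j3 by linarith
  have eq2: "b' * c s = 2 * c s1" using j1 j2 j3 by linarith
  have "b' * (b * c s1) = b' * (2 * c s)" using eq1 by (simp add: algebra_simps)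
  then have eq1': "b * c s1 = 2 * c s" using bpos by simp
  have X1: "X s s1 = 0" using r1 Xle[of s s1] eq1' by linarith
  have X2: "X s1 s = 0" using r2 Xle[of s1 s] eq2 by linarith
  have zeroX: "?A u t = 0" if "X u w = 0" "t \<notin> {u,w}" for u w t
  proof -
    have terms: "0 \<le> - (?A u t' * c t')" if "t' \<in> UNIV - {u,w}" for t'
    proof -
      have "?A u t' \<le> 0" using that cartan_props(1)[of u t'] by auto
      then show ?thesis using c0 by (simp add: mult_nonpos_nonneg)
    qed
    have "(\<Sum>t'\<in>UNIV - {u,w}. - (?A u t' * c t')) = 0" using \<open>X u w = 0\<close> by (simp add: X_def sum_negf)
    moreover have "(\<Sum>t'\<in>UNIV - {u,w}. - (?A u t' * c t')) = 0 \<longleftrightarrow> (\<forall>t'\<in>UNIV - {u,w}. - (?A u t' * c t') = 0)"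
      by (rule sum_nonneg_eq_0_iff) (simp, erule terms)
    ultimately have "\<forall>t'\<in>UNIV - {u,w}. - (?A u t' * c t') = 0" by blast
    then have "?A u t * c t = 0" using that(2) by auto
    then show ?thesis using pos[of t] by simp
  qed
  have closedE: "t \<in> {s,s1}" if "u \<in> {s,s1}" "(u,t) \<in> E" for u t
  proof (rule ccontr)
    assume nt: "t \<notin> {s,s1}"
    have "?A u t \<noteq> 0" using that(2) by (simp add: E_def)
    moreover have "?A u t = 0"
      using that(1) zeroX[OF X1, of t] zeroX[OF X2, of t] nt by auto
    ultimately show False by simp
  qed
  have allin: "t \<in> {s,s1}" for t
    using Eall[of s t]
  proof (induction rule: rtrancl_induct)
    case base then show ?case by simp
  next
    case (step y z) then show ?case using closedE by blast
  qed
  have Xz: "X u w = 0" if "u \<in> {s,s1}" "w \<in> {s,s1}" "u \<noteq> w" for u w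
  proof -
    have "{u,w} = {s,s1}" using that ss1 by auto
    then have e: "UNIV - {u,w} = {}" using allin by auto
    show ?thesis unfolding X_def e by simp
  qed
  have rowz: "(\<Sum>t\<in>UNIV. ?A u t * c t) = 0" for u
  proof -
    have "u \<in> {s,s1}" by (rule allin)
    then show ?thesis
    proof
      assume "u = s"
      then show ?thesis using row_s eq1' Xz[of s s1] ss1 by simp
    next
      assume "u \<in> {s1}"
      then show ?thesis using row_s1 eq2 Xz[of s1 s] ss1 by simp
    qed
  qed
  define Cm where "Cm = (\<chi> s t. cartan vs al s t)"
  define cv where "cv = (\<chi> t. c t)"
  have "Cm *v cv = 0" using rowz by (simp add: Cm_def cv_def matrix_vector_mult_def vec_eq_iff)
  moreover have dC: "det Cm \<noteq> 0" using sra unfolding simplicial_ra_def Cm_def by (elim conjE)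
  ultimately have "cv = 0"
    by (metis invertible_inv(2) matrix_vector_mul_assoc matrix_vector_mul_lid matrix_vector_mult_0_right)
  then show False using cnz by (simp add: cv_def vec_eq_iff)
qed

end


context cox begin

lemma NT:
  assumes irred: "irreducible_ra vs al" and st: "(s0::'s) \<noteq> t0"
  shows "\<exists>p. (\<forall>s. 0 \<le> p s) \<and> (\<forall>t. (\<Sum>s\<in>UNIV. p s * cartan vs al s t) < 0)"
proof -
  define Cm where "Cm = (\<chi> s t. cartan vs al s t)"
  define Sim where "Sim = {c::real^'s. (\<forall>t. 0 \<le> c$t) \<and> (\<Sum>t\<in>UNIV. c$t) = 1}"
  define Neg where "Neg = {d::real^'s. \<forall>s. d$s \<le> 0}"
  define Img where "Img = (\<lambda>c. Cm *v c) ` Sim"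
  define Q where "Q = (\<Union>y\<in>Neg. \<Union>x\<in>Img. {y + x})"
  have ax: "axis t (1::real) \<bullet> c = c $ t" for t and c :: "real^'s"
    unfolding inner_commute[of "axis t 1" c] inner_axis by simp
  have one: "(1::real^'s) \<bullet> c = (\<Sum>t\<in>UNIV. c$t)" for c by (simp add: inner_vec_def)
  have Sim_eq: "Sim = {c. (1::real^'s) \<bullet> c = 1} \<inter> (\<Inter>t. {c. 0 \<le> axis t (1::real) \<bullet> c})"
    unfolding Sim_def ax one by auto
  have Neg_eq: "Neg = (\<Inter>s. {d. 0 \<le> (- axis s (1::real)) \<bullet> d})"
    unfolding Neg_def inner_minus_left ax by auto
  have clSim: "closed Sim" unfolding Sim_eq
    by (intro closed_Int closed_hyperplane closed_INT ballI closed_halfspace_ge)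
  have bSim: "bounded Sim" unfolding bounded_iff
  proof (intro exI ballI)
    fix c assume c: "c \<in> Sim"
    have "norm c \<le> (\<Sum>i\<in>UNIV. \<bar>c $ i\<bar>)" by (rule norm_le_l1_cart)
    also have "\<dots> = (\<Sum>i\<in>UNIV. c $ i)" using c by (simp add: Sim_def)
    finally show "norm c \<le> 1" using c by (simp add: Sim_def)
  qed
  have cSim: "compact Sim" using clSim bSim compact_eq_bounded_closed by blast
  have lin: "linear (\<lambda>c. Cm *v (c::real^'s))" by simp
  have cImg: "compact Img" unfolding Img_def
    by (rule compact_continuous_image[OF linear_continuous_on cSim]) (use lin linear_conv_bounded_linear in blast)
  have clNeg: "closed Neg" unfolding Neg_eq by (intro closed_INT ballI closed_halfspace_ge)
  have clQ: "closed Q" unfolding Q_def by (rule closed_compact_sums[OF clNeg cImg])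
  have cvSim: "convex Sim" unfolding Sim_eq
    by (intro convex_Int convex_hyperplane convex_INT convex_halfspace_ge)
  have cvNeg: "convex Neg" unfolding Neg_eq by (intro convex_INT convex_halfspace_ge)
  have cvImg: "convex Img" unfolding Img_def by (rule convex_linear_image[OF lin cvSim])
  have cvQ: "convex Q" unfolding Q_def by (rule convex_sums[OF cvNeg cvImg])
  have nQ: "0 \<notin> Q"
  proof
    assume "0 \<in> Q"
    then obtain y c where y: "y \<in> Neg" and c: "c \<in> Sim" and e: "0 = y + Cm *v c"
      unfolding Q_def Img_def by auto
    have rows: "\<forall>u. 0 \<le> (\<Sum>t\<in>UNIV. cartan vs al u t * c $ t)"
    proof
      fix u
      have "(Cm *v c) $ u = - y $ u" using e by (simp add: vec_eq_iff eq_neg_iff_add_eq_0 add.commute)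
      moreover have "(Cm *v c) $ u = (\<Sum>t\<in>UNIV. cartan vs al u t * c $ t)"
        by (simp add: Cm_def matrix_vector_mult_def)
      ultimately show "0 \<le> (\<Sum>t\<in>UNIV. cartan vs al u t * c $ t)" using y by (simp add: Neg_def)
    qed
    have c0: "\<forall>t. 0 \<le> c $ t" using c by (simp add: Sim_def)
    have cnz: "\<exists>t. c $ t \<noteq> 0"
    proof (rule ccontr)
      assume "\<not> ?thesis"
      then have "(\<Sum>t\<in>UNIV. c$t) = 0" by simp
      then show False using c by (simp add: Sim_def)
    qed
    show False using NC[OF irred st, of "\<lambda>t. c $ t"] c0 cnz rows by blast
  qed
  obtain a b where ab: "a \<noteq> 0" "0 < b" "\<forall>x\<in>Q. b < a \<bullet> x"
    using separating_hyperplane_closed_0[OF cvQ clQ nQ] by blast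
  have inQ: "(- l) *\<^sub>R axis s (1::real) + Cm *v axis t 1 \<in> Q" if "0 \<le> l" for l s t
  proof -
    have "(- l) *\<^sub>R axis s (1::real) \<in> Neg" using that by (simp add: Neg_def axis_def)
    moreover have "axis t 1 \<in> Sim"
    proof -
      have "(\<Sum>i\<in>UNIV. axis t (1::real) $ i) = 1" by (simp add: axis_def)
      then show ?thesis by (simp add: Sim_def axis_def)
    qed
    ultimately show ?thesis unfolding Q_def Img_def by blast
  qed
  have key: "b < a \<bullet> (Cm *v axis t 1) - l * a $ s" if "0 \<le> l" for l s t
  proof -
    have "b < a \<bullet> ((- l) *\<^sub>R axis s (1::real) + Cm *v axis t 1)" using ab(3) inQ[OF that, of s t] by blast
    then show ?thesis by (simp add: inner_add_right inner_axis algebra_simps)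
  qed
  have as: "a $ s \<le> 0" for s
  proof (rule ccontr)
    assume "\<not> a $ s \<le> 0"
    then have pos: "0 < a $ s" by simp
    define l where "l = (a \<bullet> (Cm *v axis s 1)) / a $ s"
    have "b < a \<bullet> (Cm *v axis s 1) - l * a $ s" if "0 \<le> l" using key[OF that] .
    show False
    proof (cases "0 \<le> l")
      case True
      have "l * a $ s = a \<bullet> (Cm *v axis s 1)" using pos by (simp add: l_def)
      then show False using key[OF True, of s s] ab(2) by simp
    next
      case False
      then have "a \<bullet> (Cm *v axis s 1) < 0" using pos unfolding l_def
        by (metis divide_nonneg_pos linorder_not_less)
      then show False using key[of 0 s s] ab(2) by simp
    qed
  qed
  define p where "p s = - a $ s" for s
  have "(\<Sum>s\<in>UNIV. p s * cartan vs al s t) < 0" for t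
  proof -
    have "a \<bullet> (Cm *v axis t 1) = (\<Sum>s\<in>UNIV. a $ s * cartan vs al s t)"
      by (simp add: inner_vec_def mv_axis Cm_def)
    moreover have "b < a \<bullet> (Cm *v axis t 1)" using key[of 0 t t] by simp
    ultimately have "0 < (\<Sum>s\<in>UNIV. a $ s * cartan vs al s t)" using ab(2) by simp
    then show ?thesis by (simp add: p_def sum_negf)
  qed
  moreover have "\<forall>s. 0 \<le> p s" using as by (simp add: p_def)
  ultimately show ?thesis by blast
qed

lemma card2:
  assumes "infinite (rho_group vs al)" shows "\<exists>s0 t0::'s. s0 \<noteq> t0"
proof (rule ccontr)
  assume "\<not> ?thesis"
  then have all: "\<And>s t::'s. s = t" by blast
  obtain s0 :: 's where True by blast
  have "pw ws \<in> {mat 1, r s0}" for ws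
  proof (induction ws)
    case Nil then show ?case by simp
  next
    case (Cons s ws)
    have "s = s0" by (rule all)
    then show ?case using Cons.IH by (elim insertE) auto
  qed
  then have sub: "rho_group vs al \<subseteq> {mat 1, r s0}" unfolding group_eq by blast
  have "finite {mat 1, r s0}" by simp
  then have "finite (rho_group vs al)" by (rule finite_subset[OF sub])
  then show False using assms by simp
qed

end


lemma closure_cone: fixes K :: "(real^'n) set"
  assumes cone: "\<forall>x\<in>K. \<forall>t>0. t *\<^sub>R x \<in> K" and x: "x \<in> closure K" and t: "0 < t"
  shows "t *\<^sub>R x \<in> closure K"
proof -
  have "(*\<^sub>R) t ` K \<subseteq> K" using cone t by auto
  then have "closure ((*\<^sub>R) t ` K) \<subseteq> closure K" by (rule closure_mono)
  moreover have "t *\<^sub>R x \<in> (*\<^sub>R) t ` closure K" using x by blast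
  ultimately show ?thesis unfolding closure_scaleR by blast
qed

lemma add_closure: fixes K :: "(real^'n) set"
  assumes op: "open K" and cv: "convex K" and cone: "\<forall>x\<in>K. \<forall>t>0. t *\<^sub>R x \<in> K"
    and y: "y \<in> K" and q: "q \<in> closure K"
  shows "y + q \<in> K"
proof (cases "2 *\<^sub>R y = 2 *\<^sub>R q")
  case True
  then have "q = y" by simp
  then have "y + q = 2 *\<^sub>R y" by (simp add: scaleR_2)
  then show ?thesis using cone y by simp
next
  case False
  have a: "2 *\<^sub>R y \<in> interior K" using cone y op interior_open by fastforce
  have b: "2 *\<^sub>R q \<in> closure K" using closure_cone[OF cone q] by simp
  have "midpoint (2 *\<^sub>R y) (2 *\<^sub>R q) \<in> open_segment (2 *\<^sub>R y) (2 *\<^sub>R q)" using False by simp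
  then have "midpoint (2 *\<^sub>R y) (2 *\<^sub>R q) \<in> interior K"
    using in_interior_closure_convex_segment[OF cv a b] by blast
  moreover have "midpoint (2 *\<^sub>R y) (2 *\<^sub>R q) = y + q"
    by (simp add: midpoint_def scaleR_add_right[symmetric])
  ultimately show ?thesis using interior_subset by auto
qed

lemma convex_dual: fixes K :: "(real^'n) set" shows "convex (dual_cone K)"
  unfolding dual_cone_def convex_def
proof (intro allI ballI impI CollectI)
  fix x y :: "real^'n" and u v :: real and z
  assume x: "x \<in> {w. \<forall>x\<in>closure K - {0}. w \<bullet> x < 0}" and y: "y \<in> {w. \<forall>x\<in>closure K - {0}. w \<bullet> x < 0}"
    and uv: "0 \<le> u" "0 \<le> v" "u + v = 1" and z: "z \<in> closure K - {0}"
  have "x \<bullet> z < 0" "y \<bullet> z < 0" using x y z by auto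
  then have "u * (x \<bullet> z) + v * (y \<bullet> z) < 0"
  proof (cases "u = 0")
    case True then show ?thesis using uv \<open>y \<bullet> z < 0\<close> by simp
  next
    case False
    then have "u * (x \<bullet> z) < 0" using uv \<open>x \<bullet> z < 0\<close> by (simp add: mult_pos_neg)
    moreover have "v * (y \<bullet> z) \<le> 0" using uv \<open>y \<bullet> z < 0\<close> by (simp add: mult_nonneg_nonpos)
    ultimately show ?thesis by simp
  qed
  then show "(u *\<^sub>R x + v *\<^sub>R y) \<bullet> z < 0" by (simp add: inner_add_left)
qed

lemma cone_dual: "\<forall>x\<in>dual_cone K. \<forall>t>0. t *\<^sub>R x \<in> dual_cone K"
  unfolding dual_cone_def by (auto simp: mult_pos_neg)

lemma open_dual: fixes K :: "(real^'n) set"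
  assumes cone: "\<forall>x\<in>K. \<forall>t>0. t *\<^sub>R x \<in> K"
  shows "open (dual_cone K)"
  unfolding open_contains_ball
proof
  fix w assume w: "w \<in> dual_cone K"
  define T where "T = closure K \<inter> sphere 0 1"
  have cT: "compact T" unfolding T_def by (intro closed_Int_compact closed_closure compact_sphere)
  show "\<exists>e>0. ball w e \<subseteq> dual_cone K"
  proof (cases "T = {}")
    case True
    have "closure K - {0} = {}"
    proof (rule ccontr)
      assume "closure K - {0} \<noteq> {}"
      then obtain x where x: "x \<in> closure K" "x \<noteq> 0" by blast
      have "(1 / norm x) *\<^sub>R x \<in> closure K" using closure_cone[OF cone x(1)] x(2) by simp
      moreover have "(1 / norm x) *\<^sub>R x \<in> sphere 0 1" using x(2) by simp
      ultimately show False using True by (auto simp: T_def)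
    qed
    then have "dual_cone K = UNIV" unfolding dual_cone_def by auto
    then show ?thesis by (intro exI[of _ 1]) auto
  next
    case False
    have cont: "continuous_on T (\<lambda>x. w \<bullet> x)" by (intro continuous_intros)
    obtain x0 where x0: "x0 \<in> T" and mx: "\<forall>x\<in>T. w \<bullet> x \<le> w \<bullet> x0"
      using compact_attains_sup[OF compact_continuous_image[OF cont cT]] False by auto
    define m where "m = w \<bullet> x0"
    have mneg: "m < 0" using w x0 unfolding m_def dual_cone_def T_def by auto
    show ?thesis
    proof (intro exI conjI)
      show "0 < - m" using mneg by simp
      show "ball w (- m) \<subseteq> dual_cone K"
      proof
        fix w' assume w': "w' \<in> ball w (- m)"
        show "w' \<in> dual_cone K" unfolding dual_cone_def
        proof (intro CollectI ballI)
          fix x assume x: "x \<in> closure K - {0}"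
          define y where "y = (1 / norm x) *\<^sub>R x"
          have ny: "norm x > 0" using x by simp
          have "y \<in> closure K" unfolding y_def using closure_cone[OF cone, of x] x by simp
          moreover have "y \<in> sphere 0 1" using x by (simp add: y_def)
          ultimately have yT: "y \<in> T" by (simp add: T_def)
          have "w' \<bullet> y = w \<bullet> y + (w' - w) \<bullet> y" by (simp add: inner_diff_left)
          also have "(w' - w) \<bullet> y \<le> norm (w' - w) * norm y" by (rule norm_cauchy_schwarz)
          also have "norm y = 1" using yT by (simp add: T_def)
          finally have "w' \<bullet> y \<le> w \<bullet> y + norm (w' - w)" by simp
          moreover have "w \<bullet> y \<le> m" using mx yT by (simp add: m_def)
          moreover have "norm (w' - w) < - m" using w' by (simp add: dist_norm norm_minus_commute)
          ultimately have "w' \<bullet> y < 0" by linarith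
          moreover have "x = norm x *\<^sub>R y" using ny by (simp add: y_def)
          ultimately show "w' \<bullet> x < 0" using ny
            by (metis inner_scaleR_right mult_pos_neg)
        qed
      qed
    qed
  qed
qed


lemma HC: fixes Q :: "(real^'n) set" and f p :: "real^'n"
  assumes op: "open Q" and cv: "convex Q" and cone: "\<forall>x\<in>Q. \<forall>t>0. t *\<^sub>R x \<in> Q" and k: "f \<bullet> p \<noteq> 0"
  shows "cone_over (interior (convex hull (insert p {x\<in>Q. f \<bullet> x = 0}))) =
         {c + t *\<^sub>R p | c t. c \<in> Q \<and> f \<bullet> c = 0 \<and> 0 < t}"
proof -
  define C where "C = {x\<in>Q. f \<bullet> x = 0}"
  define k where "k = f \<bullet> p"
  have k0: "k \<noteq> 0" using k by (simp add: k_def)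
  have p0: "p \<noteq> 0" using k by auto
  have Ceq: "C = Q \<inter> {x. f \<bullet> x = 0}" unfolding C_def by blast
  have cvC: "convex C" unfolding Ceq by (rule convex_Int[OF cv convex_hyperplane])
  show ?thesis
  proof (cases "C = {}")
    case True
    have "convex hull (insert p C) = {p}" using True by simp
    then have l: "cone_over (interior (convex hull (insert p C))) = {}" unfolding cone_over_def by simp
    have r: "{c + t *\<^sub>R p | c t. c \<in> Q \<and> f \<bullet> c = 0 \<and> 0 < t} = {}" using True unfolding C_def by blast
    show ?thesis unfolding C_def[symmetric] l r ..
  next
    case False
    have hull: "convex hull (insert p C) = {x. \<exists>u\<ge>0. \<exists>w\<ge>0. \<exists>b. u + w = 1 \<and> b \<in> C \<and> x = u *\<^sub>R p + w *\<^sub>R b}"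
      using convex_hull_insert[OF False] convex_hull_eq[of C] cvC by simp
    have fhull: "0 \<le> (f \<bullet> z) / k \<and> (f \<bullet> z) / k \<le> 1" if "z \<in> convex hull (insert p C)" for z
    proof -
      have "\<exists>u\<ge>0. \<exists>w\<ge>0. \<exists>b. u + w = 1 \<and> b \<in> C \<and> z = u *\<^sub>R p + w *\<^sub>R b"
        using that unfolding hull by (rule CollectD)
      then obtain u w b where "u \<ge> 0" "w \<ge> 0" "u + w = 1" "b \<in> C" "z = u *\<^sub>R p + w *\<^sub>R b"
        by blast
      then have "(f \<bullet> z) / k = u" using k0 by (simp add: C_def inner_add_right k_def)
      then show ?thesis using \<open>u \<ge> 0\<close> \<open>w \<ge> 0\<close> \<open>u + w = 1\<close> by simp
    qed
    show ?thesis unfolding C_def[symmetric]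
    proof
      show "cone_over (interior (convex hull (insert p C))) \<subseteq> {c + t *\<^sub>R p | c t. c \<in> Q \<and> f \<bullet> c = 0 \<and> 0 < t}"
      proof
        fix z assume "z \<in> cone_over (interior (convex hull (insert p C)))"
        then obtain s y where sy: "0 < s" "y \<in> interior (convex hull (insert p C))" "z = s *\<^sub>R y"
          unfolding cone_over_def by auto
        obtain e where e: "0 < e" "ball y e \<subseteq> convex hull (insert p C)" using sy(2) mem_interior by blast
        have "y \<in> convex hull (insert p C)" using interior_subset sy(2) by blast
        then have "\<exists>u\<ge>0. \<exists>w\<ge>0. \<exists>b. u + w = 1 \<and> b \<in> C \<and> y = u *\<^sub>R p + w *\<^sub>R b"
          unfolding hull by (rule CollectD)
        then obtain u w b where uwb: "u \<ge> 0" "w \<ge> 0" "u + w = 1" "b \<in> C" "y = u *\<^sub>R p + w *\<^sub>R b"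
          by blast
        have fy: "(f \<bullet> y) / k = u" using uwb k0 by (simp add: C_def inner_add_right k_def)
        define d where "d = e / (2 * norm p)"
        have d0: "0 < d" using e p0 by (simp add: d_def)
        have "norm (d *\<^sub>R p) < e" using e p0 by (simp add: d_def)
        then have "y + d *\<^sub>R p \<in> ball y e" "y - d *\<^sub>R p \<in> ball y e" unfolding mem_ball dist_norm by simp_all
        then have "y + d *\<^sub>R p \<in> convex hull (insert p C)" "y - d *\<^sub>R p \<in> convex hull (insert p C)"
          using e(2) by blast+
        then have h1: "(f \<bullet> (y + d *\<^sub>R p)) / k \<le> 1" and h2: "0 \<le> (f \<bullet> (y - d *\<^sub>R p)) / k"
          using fhull by blast+
        have "(f \<bullet> (y + d *\<^sub>R p)) / k = u + d" using fy k0
          by (simp add: inner_add_right k_def add_divide_distrib)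
        moreover have "(f \<bullet> (y - d *\<^sub>R p)) / k = u - d" using fy k0
          by (simp add: inner_diff_right k_def diff_divide_distrib)
        ultimately have u01: "0 < u" "u < 1" using h1 h2 d0 by auto
        have w0: "0 < w" using u01 uwb by simp
        have "z = s *\<^sub>R (u *\<^sub>R p + w *\<^sub>R b)" using sy(3) uwb(5) by simp
        also have "\<dots> = (s * w) *\<^sub>R b + (s * u) *\<^sub>R p" by (simp add: scaleR_add_right add.commute)
        finally have "z = (s * w) *\<^sub>R b + (s * u) *\<^sub>R p" .
        moreover have "(s * w) *\<^sub>R b \<in> Q" using cone uwb(4) sy(1) w0 by (simp add: C_def)
        moreover have "f \<bullet> ((s * w) *\<^sub>R b) = 0" using uwb(4) by (simp add: C_def)
        moreover have "0 < s * u" using sy(1) u01 by simp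
        ultimately show "z \<in> {c + t *\<^sub>R p | c t. c \<in> Q \<and> f \<bullet> c = 0 \<and> 0 < t}" by blast
      qed
    next
      show "{c + t *\<^sub>R p | c t. c \<in> Q \<and> f \<bullet> c = 0 \<and> 0 < t} \<subseteq> cone_over (interior (convex hull (insert p C)))"
      proof
        fix z assume "z \<in> {c + t *\<^sub>R p | c t. c \<in> Q \<and> f \<bullet> c = 0 \<and> 0 < t}"
        then obtain c t where ct: "c \<in> Q" "f \<bullet> c = 0" "0 < t" "z = c + t *\<^sub>R p" by blast
        define P0 where "P0 = {y. 0 < (f \<bullet> y) / k} \<inter> {y. (f \<bullet> y) / k < 1} \<inter> (\<lambda>y. y - ((f \<bullet> y) / k) *\<^sub>R p) -` Q"
        have opP0: "open P0" unfolding P0_def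
          by (intro open_Int open_Collect_less open_vimage op continuous_intros) (use k0 in auto)
        have P0h: "P0 \<subseteq> convex hull (insert p C)"
        proof
          fix y assume y: "y \<in> P0"
          define th where "th = (f \<bullet> y) / k"
          have th: "0 < th" "th < 1" "y - th *\<^sub>R p \<in> Q" using y by (auto simp: P0_def th_def)
          define b where "b = (1 / (1 - th)) *\<^sub>R (y - th *\<^sub>R p)"
          have bQ: "b \<in> Q" using cone th by (simp add: b_def)
          have "f \<bullet> (y - th *\<^sub>R p) = 0" using k0 by (simp add: th_def inner_diff_right k_def)
          then have "f \<bullet> b = 0" by (simp add: b_def)
          then have bC: "b \<in> C" using bQ by (simp add: C_def)
          have "y = th *\<^sub>R p + (1 - th) *\<^sub>R b" using th by (simp add: b_def)
          then have "0 \<le> th \<and> 0 \<le> 1 - th \<and> th + (1 - th) = 1 \<and> b \<in> C \<and> y = th *\<^sub>R p + (1 - th) *\<^sub>R b"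
            using th bC by simp
          then show "y \<in> convex hull (insert p C)" unfolding hull by blast
        qed
        have intP0: "P0 \<subseteq> interior (convex hull (insert p C))" by (rule interior_maximal[OF P0h opP0])
        define y where "y = (1 / (2 * t)) *\<^sub>R c + (1/2) *\<^sub>R p"
        have fy: "(f \<bullet> y) / k = 1/2" using ct(2) k0 by (simp add: y_def inner_add_right k_def)
        have "y - (1/2) *\<^sub>R p = (1 / (2 * t)) *\<^sub>R c" by (simp add: y_def)
        then have "y \<in> P0" unfolding P0_def using fy cone ct by simp
        then have yi: "y \<in> interior (convex hull (insert p C))" using intP0 by blast
        have yne: "y \<noteq> 0" using fy by auto
        have "z = (2 * t) *\<^sub>R y" using ct by (simp add: y_def algebra_simps)
        then show "z \<in> cone_over (interior (convex hull (insert p C)))"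
          unfolding cone_over_def using yi yne ct(3) by (intro CollectI exI[of _ "2 * t"] exI[of _ y]) auto
      qed
    qed
  qed
qed


lemma DL: fixes K :: "(real^'n) set" and v a c0 :: "real^'n"
  assumes op: "open K" and cv: "convex K" and cone: "\<forall>x\<in>K. \<forall>t>0. t *\<^sub>R x \<in> K"
    and av: "a \<bullet> v = 2" and c0: "c0 \<in> K" "a \<bullet> c0 = 0"
    and Rinv: "\<forall>z\<in>closure K. z - (a \<bullet> z) *\<^sub>R v \<in> closure K"
    and nv: "v \<notin> closure K" "- v \<notin> closure K"
  shows "dual_cone {c + t *\<^sub>R v | c t. c \<in> K \<and> a \<bullet> c = 0 \<and> 0 < t} =
         {c - t *\<^sub>R a | c t. c \<in> dual_cone K \<and> v \<bullet> c = 0 \<and> 0 < t}"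
proof -
  define P where "P = {c + t *\<^sub>R v | c t. c \<in> K \<and> a \<bullet> c = 0 \<and> 0 < t}"
  define E where "E = {y. 0 \<le> a \<bullet> y} \<inter> (\<lambda>y. y - ((a \<bullet> y) / 2) *\<^sub>R v) -` closure K"
  have clE: "closed E" unfolding E_def
    by (intro closed_Int closed_halfspace_ge closed_vimage closed_closure continuous_intros) auto
  have PE: "P \<subseteq> E"
  proof
    fix y assume "y \<in> P"
    then obtain c t where ct: "c \<in> K" "a \<bullet> c = 0" "0 < t" "y = c + t *\<^sub>R v" unfolding P_def by blast
    have ay: "a \<bullet> y = 2 * t" using ct av by (simp add: inner_add_right)
    have "y - ((a \<bullet> y) / 2) *\<^sub>R v = c" using ay ct by simp
    then show "y \<in> E" unfolding E_def using ay ct closure_subset by auto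
  qed
  have clP: "closure P \<subseteq> E" by (rule closure_minimal[OF PE clE])
  have v0: "v \<noteq> 0" using av by auto
  show ?thesis unfolding P_def[symmetric]
  proof
    show "dual_cone P \<subseteq> {c - t *\<^sub>R a | c t. c \<in> dual_cone K \<and> v \<bullet> c = 0 \<and> 0 < t}"
    proof
      fix w assume w: "w \<in> dual_cone P"
      have wneg: "w \<bullet> y < 0" if "y \<in> closure P" "y \<noteq> 0" for y
        using w that unfolding dual_cone_def by blast
      have vP: "v \<in> closure P"
        unfolding closure_approachable
      proof (intro allI impI)
        fix e :: real assume e: "0 < e"
        define s where "s = e / (2 * (norm c0 + 1))"
        have "0 < 2 * (norm c0 + 1)" by (simp add: add_nonneg_pos)
        then have s0: "0 < s" using e unfolding s_def by (rule divide_pos_pos[rotated])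
        have "s *\<^sub>R c0 + 1 *\<^sub>R v \<in> P" unfolding P_def using cone c0 s0
          by (intro CollectI exI[of _ "s *\<^sub>R c0"] exI[of _ 1]) auto
        moreover have "dist (s *\<^sub>R c0 + 1 *\<^sub>R v) v < e"
        proof -
          have "dist (s *\<^sub>R c0 + 1 *\<^sub>R v) v = s * norm c0" using s0 by (simp add: dist_norm)
          also have "\<dots> < e"
          proof -
            have "norm c0 / (2 * (norm c0 + 1)) < 1" using \<open>0 < 2 * (norm c0 + 1)\<close> by simp
            then have "e * (norm c0 / (2 * (norm c0 + 1))) < e * 1" using e by (rule mult_strict_left_mono)
            moreover have "s * norm c0 = e * (norm c0 / (2 * (norm c0 + 1)))" by (simp add: s_def)
            ultimately show ?thesis by simp
          qed
          finally show ?thesis .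
        qed
        ultimately show "\<exists>y\<in>P. dist y v < e" by blast
      qed
      have wv: "w \<bullet> v < 0" using wneg[OF vP v0] .
      define t0 where "t0 = - (w \<bullet> v) / 2"
      have t0p: "0 < t0" using wv by (simp add: t0_def)
      define c where "c = w + t0 *\<^sub>R a"
      have va: "v \<bullet> a = 2" using av by (simp add: inner_commute)
      have "v \<bullet> c = v \<bullet> w + t0 * (v \<bullet> a)" by (simp add: c_def inner_add_right)
      also have "\<dots> = v \<bullet> w - w \<bullet> v" using va by (simp add: t0_def)
      finally have vc: "v \<bullet> c = 0" by (simp add: inner_commute)
      have cv0: "c \<bullet> v = 0" using vc by (simp add: inner_commute)
      have wc: "w = c - t0 *\<^sub>R a" by (simp add: c_def)
      have cK: "c \<in> dual_cone K" unfolding dual_cone_def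
      proof (intro CollectI ballI)
        fix z assume z: "z \<in> closure K - {0}"
        define z' where "z' = z - ((a \<bullet> z) / 2) *\<^sub>R v"
        have zK: "z \<in> closure K" and zn: "z \<noteq> 0" using z by auto
        have "z' = (1/2) *\<^sub>R z + (1/2) *\<^sub>R (z - (a \<bullet> z) *\<^sub>R v)" by (simp add: z'_def algebra_simps vec_eq_iff)
        moreover have "z - (a \<bullet> z) *\<^sub>R v \<in> closure K" using Rinv zK by blast
        ultimately have z'K: "z' \<in> closure K"
          using convexD[OF convex_closure[OF cv] zK, of "z - (a \<bullet> z) *\<^sub>R v" "1/2" "1/2"] by simp
        have az': "a \<bullet> z' = 0" using av by (simp add: z'_def inner_diff_right)
        have cz: "c \<bullet> z = c \<bullet> z'" using cv0 by (simp add: z'_def inner_diff_right)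
        show "c \<bullet> z < 0"
        proof (cases "z' = 0")
          case True
          then have zeq: "z = ((a \<bullet> z) / 2) *\<^sub>R v" by (simp add: z'_def)
          then have az: "a \<bullet> z \<noteq> 0" using zn by auto
          show ?thesis
          proof (cases "0 < a \<bullet> z")
            case True
            have "(2 / (a \<bullet> z)) *\<^sub>R z \<in> closure K" using closure_cone[OF cone zK] True by simp
            moreover have "(2 / (a \<bullet> z)) *\<^sub>R z = v" using True by (subst zeq) simp
            ultimately show ?thesis using nv(1) by simp
          next
            case False
            then have neg: "a \<bullet> z < 0" using az by simp
            have "0 < - 2 / (a \<bullet> z)" using neg by (simp add: divide_neg_neg)
            then have "(- 2 / (a \<bullet> z)) *\<^sub>R z \<in> closure K" by (rule closure_cone[OF cone zK])
            moreover have "(- 2 / (a \<bullet> z)) *\<^sub>R z = - v" using neg by (subst zeq) simp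
            ultimately show ?thesis using nv(2) by simp
          qed
        next
          case False
          have z'P: "z' \<in> closure P"
            unfolding closure_approachable
          proof (intro allI impI)
            fix e :: real assume e: "0 < e"
            define M where "M = norm (c0 - z') + norm v + 1"
            have M0: "0 < M" by (simp add: M_def add_nonneg_pos)
            define d where "d = min (1/2) (e / (2 * M))"
            have d0: "0 < d" "d < 1" using e M0 by (auto simp: d_def)
            define q where "q = (1 - (1 - d)) *\<^sub>R c0 + (1 - d) *\<^sub>R z'"
            have qK: "q \<in> K"
            proof (cases "c0 = z'")
              case True then show ?thesis using c0 by (simp add: q_def algebra_simps)
            next
              case False
              have "q \<in> open_segment c0 z'" unfolding in_segment using False d0
                by (intro conjI exI[of _ "1 - d"]) (auto simp: q_def)
              moreover have "c0 \<in> interior K" using c0(1) op interior_open by blast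
              ultimately have "q \<in> interior K" using in_interior_closure_convex_segment[OF cv _ z'K] by blast
              then show ?thesis using interior_subset by blast
            qed
            have aq: "a \<bullet> q = 0" using c0 az' by (simp add: q_def inner_add_right)
            have "q + d *\<^sub>R v \<in> P" unfolding P_def using qK aq d0
              by (intro CollectI exI[of _ q] exI[of _ d]) auto
            moreover have "dist (q + d *\<^sub>R v) z' < e"
            proof -
              have "q + d *\<^sub>R v - z' = d *\<^sub>R ((c0 - z') + v)" by (simp add: q_def algebra_simps)
              then have "dist (q + d *\<^sub>R v) z' = d * norm ((c0 - z') + v)" using d0 by (simp add: dist_norm)
              also have "\<dots> \<le> d * M" using d0 norm_triangle_ineq[of "c0 - z'" v]
                by (intro mult_left_mono) (auto simp: M_def)
              also have "\<dots> \<le> (e / (2 * M)) * M" using M0 by (intro mult_right_mono) (auto simp: d_def)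
              also have "\<dots> < e" using M0 e by simp
              finally show ?thesis .
            qed
            ultimately show "\<exists>y\<in>P. dist y z' < e" by blast
          qed
          have "w \<bullet> z' < 0" using wneg[OF z'P False] .
          moreover have "c \<bullet> z' = w \<bullet> z'" using az' by (simp add: c_def inner_add_left)
          ultimately show ?thesis using cz by simp
        qed
      qed
      show "w \<in> {c - t *\<^sub>R a | c t. c \<in> dual_cone K \<and> v \<bullet> c = 0 \<and> 0 < t}"
        using wc cK vc t0p by blast
    qed
  next
    show "{c - t *\<^sub>R a | c t. c \<in> dual_cone K \<and> v \<bullet> c = 0 \<and> 0 < t} \<subseteq> dual_cone P"
    proof
      fix w assume "w \<in> {c - t *\<^sub>R a | c t. c \<in> dual_cone K \<and> v \<bullet> c = 0 \<and> 0 < t}"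
      then obtain c t where ct: "c \<in> dual_cone K" "v \<bullet> c = 0" "0 < t" "w = c - t *\<^sub>R a" by blast
      show "w \<in> dual_cone P" unfolding dual_cone_def
      proof (intro CollectI ballI)
        fix y assume y: "y \<in> closure P - {0}"
        then have yE: "y \<in> E" using clP by blast
        define h where "h = y - ((a \<bullet> y) / 2) *\<^sub>R v"
        define tau where "tau = (a \<bullet> y) / 2"
        have hK: "h \<in> closure K" and tau0: "0 \<le> tau" using yE by (auto simp: E_def h_def tau_def)
        have ah: "a \<bullet> h = 0" using av by (simp add: h_def inner_diff_right)
        have yeq: "y = h + tau *\<^sub>R v" by (simp add: h_def tau_def)
        have cv0: "c \<bullet> v = 0" using ct(2) by (simp add: inner_commute)
        have wy: "w \<bullet> y = c \<bullet> h - 2 * t * tau"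
          using ct(4) yeq ah av cv0 by (simp add: inner_add_right inner_diff_left)
        show "w \<bullet> y < 0"
        proof (cases "h = 0")
          case True
          then have "tau \<noteq> 0" using y yeq by auto
          then have "0 < tau" using tau0 by simp
          then show ?thesis using wy True ct(3) by simp
        next
          case False
          then have "c \<bullet> h < 0" using ct(1) hK unfolding dual_cone_def by blast
          moreover have "0 \<le> 2 * t * tau" using ct(3) tau0 by simp
          ultimately show ?thesis using wy by linarith
        qed
      qed
    qed
  qed
qed


lemma cone_strict: fixes f :: "'s::finite \<Rightarrow> real^'n"
  assumes b: "b \<in> cone_of f" "b \<noteq> 0" and x: "\<forall>t. f t \<bullet> x < 0"
  shows "b \<bullet> x < 0"
proof -
  obtain c where c: "\<forall>t. 0 \<le> c t" "b = (\<Sum>t\<in>UNIV. c t *\<^sub>R f t)" using b(1) unfolding cone_of_def by blast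
  have bx: "b \<bullet> x = (\<Sum>t\<in>UNIV. c t * (f t \<bullet> x))" using c(2) by (simp add: inner_sum_left)
  have terms: "0 \<le> - (c t * (f t \<bullet> x))" for t
    using mult_nonneg_nonpos[of "c t" "f t \<bullet> x"] c(1) x by (simp add: less_imp_le)
  show ?thesis
  proof (rule ccontr)
    assume "\<not> ?thesis"
    then have "0 \<le> b \<bullet> x" by simp
    moreover have "(\<Sum>t\<in>UNIV. - (c t * (f t \<bullet> x))) \<ge> 0" using terms by (simp add: sum_nonneg)
    ultimately have "(\<Sum>t\<in>UNIV. - (c t * (f t \<bullet> x))) = 0" using bx by (simp add: sum_negf)
    moreover have "(\<Sum>t\<in>UNIV. - (c t * (f t \<bullet> x))) = 0 \<longleftrightarrow> (\<forall>t\<in>UNIV. - (c t * (f t \<bullet> x)) = 0)"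
      by (rule sum_nonneg_eq_0_iff) (simp, rule terms)
    ultimately have "\<forall>t. c t * (f t \<bullet> x) = 0" by simp
    then have "\<forall>t. c t = 0" using x by (metis mult_eq_0_iff order_less_irrefl)
    then have "b = 0" using c(2) by simp
    then show False using b(2) by simp
  qed
qed

lemma outer_scalar: fixes v a g b :: "real^'n"
  assumes e: "outer v a = outer g b" and g0: "g \<noteq> 0" and b0: "b \<noteq> 0"
  shows "\<exists>m. v = m *\<^sub>R g \<and> b = m *\<^sub>R a"
proof -
  have "outer v a *v b = outer g b *v b" using e by simp
  then have e1: "(a \<bullet> b) *\<^sub>R v = (b \<bullet> b) *\<^sub>R g" by (simp add: outer_mv)
  have bb: "b \<bullet> b \<noteq> 0" using b0 by simp
  have ab: "a \<bullet> b \<noteq> 0"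
  proof
    assume "a \<bullet> b = 0"
    then have "(b \<bullet> b) *\<^sub>R g = 0" using e1 by simp
    then show False using bb g0 by simp
  qed
  define m where "m = (b \<bullet> b) / (a \<bullet> b)"
  have vm: "v = m *\<^sub>R g"
  proof -
    have "v = (1 / (a \<bullet> b)) *\<^sub>R ((a \<bullet> b) *\<^sub>R v)" using ab by simp
    also have "\<dots> = (1 / (a \<bullet> b)) *\<^sub>R ((b \<bullet> b) *\<^sub>R g)" using e1 by simp
    also have "\<dots> = m *\<^sub>R g" by (simp add: m_def)
    finally show ?thesis .
  qed
  obtain i where gi: "g $ i \<noteq> 0" using g0 by (auto simp: vec_eq_iff)
  have "b $ j = m * a $ j" for j
  proof -
    have "outer v a $ i $ j = outer g b $ i $ j" using e by simp
    then have "m * g $ i * a $ j = g $ i * b $ j" using vm by (simp add: outer_def)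
    then show ?thesis using gi by (simp add: mult.commute mult.left_commute)
  qed
  then have "b = m *\<^sub>R a" by (simp add: vec_eq_iff)
  then show ?thesis using vm by blast
qed

context cox begin

lemma PL:
  assumes irred: "irreducible_ra vs al"
    and Kop: "open K" and Kcv: "convex K" and Kne: "K \<noteq> {}" and K0: "0 \<notin> K"
    and inv: "\<forall>g\<in>rho_group vs al. (\<lambda>x. g *v x) ` K \<subseteq> K"
    and z: "z \<noteq> 0" "\<forall>y\<in>K. \<forall>t::real. y + t *\<^sub>R z \<in> K"
  shows False
proof -
  define U where "U = {z. \<forall>y\<in>K. \<forall>t::real. y + t *\<^sub>R z \<in> K}"
  have U0: "0 \<in> U" by (simp add: U_def)
  have Uadd: "x1 + x2 \<in> U" if "x1 \<in> U" "x2 \<in> U" for x1 x2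
    unfolding U_def
  proof (intro CollectI ballI allI)
    fix y t assume y: "y \<in> K"
    have "y + t *\<^sub>R x1 \<in> K" using that(1) y by (simp add: U_def)
    then have "(y + t *\<^sub>R x1) + t *\<^sub>R x2 \<in> K" using that(2) by (simp add: U_def)
    then show "y + t *\<^sub>R (x1 + x2) \<in> K" by (simp add: scaleR_add_right add.assoc)
  qed
  have Uscale: "c *\<^sub>R x \<in> U" if "x \<in> U" for c x
    using that unfolding U_def by (auto simp: scaleR_scaleR)
  have rK: "r s *v y \<in> K" if "y \<in> K" for s y
  proof -
    have "r s \<in> rho_group vs al" unfolding group_eq by (metis pw_Cons pw_Nil matrix_mul_rid rangeI)
    then show ?thesis using inv that by blast
  qed
  have Ur: "r s *v x \<in> U" if "x \<in> U" for s x
    unfolding U_def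
  proof (intro CollectI ballI allI)
    fix y t assume y: "y \<in> K"
    have "r s *v y + t *\<^sub>R x \<in> K" using that rK[OF y] by (simp add: U_def)
    then have "r s *v (r s *v y + t *\<^sub>R x) \<in> K" by (rule rK)
    moreover have "r s *v (r s *v y + t *\<^sub>R x) = y + t *\<^sub>R (r s *v x)"
      by (simp add: matrix_vector_right_distrib matrix_vector_mult_scaleR matrix_vector_mul_assoc)
    ultimately show "y + t *\<^sub>R (r s *v x) \<in> K" by simp
  qed
  have vsU: "vs s \<in> U" if "x \<in> U" "al s \<bullet> x \<noteq> 0" for s x
  proof -
    have "x + (-1) *\<^sub>R (r s *v x) \<in> U" using Uadd Uscale Ur that(1) by blast
    moreover have "x + (-1) *\<^sub>R (r s *v x) = (al s \<bullet> x) *\<^sub>R vs s" by (simp add: r_mv)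
    ultimately have "(1 / (al s \<bullet> x)) *\<^sub>R ((al s \<bullet> x) *\<^sub>R vs s) \<in> U" using Uscale by metis
    moreover have "(1 / (al s \<bullet> x)) *\<^sub>R ((al s \<bullet> x) *\<^sub>R vs s) = vs s" using that(2) by simp
    ultimately show ?thesis by simp
  qed
  have zU: "z \<in> U" using z(2) by (simp add: U_def)
  obtain s0 where s0: "al s0 \<bullet> z \<noteq> 0" using nonzero_root[OF z(1)] by blast
  have v0: "vs s0 \<in> U" by (rule vsU[OF zU s0])
  define E where "E = {(s,t). s \<noteq> t \<and> cartan vs al s t \<noteq> 0}"
  have allv: "vs x \<in> U" for x
  proof -
    have "(x, s0) \<in> E\<^sup>*" using irred unfolding irreducible_ra_def E_def by auto
    then show ?thesis
    proof (induction rule: converse_rtrancl_induct)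
      case base then show ?case by (rule v0)
    next
      case (step y w)
      then have "al y \<bullet> vs w \<noteq> 0" by (simp add: E_def cartan_def)
      then show ?case using vsU step.IH by blast
    qed
  qed
  have Usum: "sum f S \<in> U" if "finite S" "\<forall>t. f t \<in> U" for f :: "'s \<Rightarrow> real^'s" and S
    using that(1) by (induction rule: finite_induct) (auto intro: U0 Uadd that(2)[rule_format])
  have allU: "x \<in> U" for x
  proof -
    obtain c where "x = (\<Sum>t\<in>UNIV. c t *\<^sub>R vs t)" using span_vs by blast
    then show ?thesis using Usum[of UNIV "\<lambda>t. c t *\<^sub>R vs t"] Uscale allv by simp
  qed
  obtain y where y: "y \<in> K" using Kne by blast
  have "- y \<in> U" by (rule allU)
  then have "y + 1 *\<^sub>R (- y) \<in> K" using y unfolding U_def by blast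
  then show False using K0 by simp
qed

lemma phi_neg:
  assumes p0: "\<forall>s. 0 \<le> p s" and pneg: "\<forall>t. (\<Sum>s\<in>UNIV. p s * cartan vs al s t) < 0"
    and g: "g \<in> rho_group vs al" and x: "x \<in> chamber al"
  shows "(\<Sum>s\<in>UNIV. p s *\<^sub>R al s) \<bullet> (g *v x) \<le> 0"
proof -
  define phi where "phi = (\<Sum>s\<in>UNIV. p s *\<^sub>R al s)"
  obtain ws where gw: "g = pw ws" using g unfolding group_eq by blast
  have phic: "phi \<in> cone_of al" unfolding phi_def cone_of_def using p0 by blast
  have "vs t \<bullet> phi = (\<Sum>s\<in>UNIV. p s * cartan vs al s t)" for t
    by (simp add: phi_def inner_sum_right cartan_def inner_commute)
  then have phich: "phi \<in> chamber vs" using pneg unfolding chamber_def by (simp add: less_imp_le)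
  have "transpose (pw ws) *v phi - phi \<in> cone_of al" by (rule dual_T1[OF phich])
  then have "(transpose (pw ws) *v phi - phi) + phi \<in> cone_of al" using phic by (rule cone_add)
  then have "transpose (pw ws) *v phi \<in> cone_of al" by simp
  then have "(transpose (pw ws) *v phi) \<bullet> x \<le> 0" using x by (rule cone_chamber)
  then show ?thesis unfolding phi_def[symmetric] gw by (simp add: dot_lmul_matrix)
qed

end


theorem lemma5p12:
  fixes vs al :: "'s::finite \<Rightarrow> real^'s"
    and K :: "(real^'s) set"
    and R :: "real^'s^'s"
    and v a v' a' :: "real^'s"
  assumes simp_rep: "simplicial_ra vs al"
    and irred: "irreducible_ra vs al"
    and infin: "infinite (rho_group vs al)"
    and dom: "reflection_domain vs al K"
    and R_refl: "R \<in> rho_reflections vs al"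
    and R_eq: "R = refl_mat v a" and a_v: "a \<bullet> v = 2"
    and a_norm: "\<forall>x \<in> chamber al \<inter> K. a \<bullet> x \<le> 0"
    and Rd_eq: "dual_mat R = refl_mat a' v'" and v'_a': "v' \<bullet> a' = 2"
    and v'_norm: "\<forall>w \<in> chamber vs \<inter> dual_cone K. v' \<bullet> w \<le> 0"
  shows "dual_cone (half_cone_pos K v a) = half_cone_neg (dual_cone K) a' v'"
proof -
  interpret cox vs al by unfold_locales (rule simp_rep)
  have Kop: "open K" and Kcv: "convex K" and Kne: "K \<noteq> {}" and K0: "0 \<notin> K"
    and Kcone: "\<forall>x\<in>K. \<forall>t>0. t *\<^sub>R x \<in> K" and Kvin: "K \<subseteq> vinberg_cone vs al"
    and Kinv: "\<forall>g\<in>rho_group vs al. (\<lambda>x. g *v x) ` K \<subseteq> K"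
    using dom unfolding reflection_domain_def open_convex_cone_def by auto
  have Kpw: "pw ws *v y \<in> K" if "y \<in> K" for ws y
    using Kinv that unfolding group_eq by blast
  have pw_inv: "pw (rev ws) *v (pw ws *v x) = x" for ws x
    by (simp add: matrix_vector_mul_assoc pw_rev1)
  have pw_inv2: "pw ws *v (pw (rev ws) *v x) = x" for ws x
    by (simp add: matrix_vector_mul_assoc pw_rev2)
  obtain g s where g: "g \<in> rho_group vs al" and Rg: "R = g ** refl_mat (vs s) (al s) ** matrix_inv g"
    using R_refl unfolding rho_reflections_def by blast
  obtain gs where ggs: "g = pw gs" using g unfolding group_eq by blast
  have ginv: "matrix_inv g = pw (rev gs)" unfolding ggs by (rule matrix_inv_eq[OF pw_rev2 pw_rev1])
  have R0: "R = pw (rev (rev gs)) ** r s ** pw (rev gs)" using Rg ginv ggs by (simp add: r_def)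
  obtain hs where Rh: "R = pw (rev hs) ** r s ** pw hs" and Lc: "L (pw hs) \<le> L (r s ** pw hs)"
  proof (cases "L (pw (rev gs)) \<le> L (r s ** pw (rev gs))")
    case True then show ?thesis using that R0 by blast
  next
    case False
    have "R = pw (rev (s # rev gs)) ** r s ** pw (s # rev gs)"
      using R0 by (simp add: pw_append matrix_mul_assoc[symmetric])
    moreover have "L (pw (s # rev gs)) \<le> L (r s ** pw (s # rev gs))" using False by simp
    ultimately show ?thesis using that by blast
  qed
  define beta where "beta = al s v* pw hs"
  define gam where "gam = pw (rev hs) *v vs s"
  have beta_c: "beta \<in> cone_of al" unfolding beta_def by (rule RP[OF Lc])
  have gam_c: "gam \<in> cone_of vs" unfolding gam_def by (rule dual_RP[OF Lc])
  have Rgb: "R = refl_mat gam beta"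
    unfolding matrix_eq
  proof
    fix x
    have "R *v x = pw (rev hs) *v (r s *v (pw hs *v x))" by (simp add: Rh matrix_vector_mul_assoc matrix_mul_assoc)
    also have "\<dots> = x - (al s \<bullet> (pw hs *v x)) *\<^sub>R gam"
      by (simp add: r_mv matrix_vector_mult_diff_distrib matrix_vector_mult_scaleR pw_inv gam_def)
    also have "\<dots> = refl_mat gam beta *v x" by (simp add: refl_mv beta_def dot_lmul_matrix)
    finally show "R *v x = refl_mat gam beta *v x" .
  qed
  have outer1: "outer v a = outer gam beta"
    using Rgb R_eq unfolding refl_mat_def by simp
  have al0: "al s \<noteq> 0" using diag2[of s] by auto
  have vs0: "vs s \<noteq> 0" using diag2[of s] by auto
  have beta0: "beta \<noteq> 0"
  proof
    assume "beta = 0"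
    then have "beta v* pw (rev hs) = 0" by simp
    moreover have "beta v* pw (rev hs) = al s" by (simp add: beta_def vector_matrix_mul_assoc pw_rev2)
    ultimately show False using al0 by simp
  qed
  have gam0: "gam \<noteq> 0"
  proof
    assume "gam = 0"
    then have "pw hs *v gam = 0" by simp
    moreover have "pw hs *v gam = vs s" by (simp add: gam_def pw_inv2)
    ultimately show False using vs0 by simp
  qed
  obtain mu where mu: "v = mu *\<^sub>R gam" "beta = mu *\<^sub>R a" using outer_scalar[OF outer1 gam0 beta0] by blast
  obtain y0 where y0: "y0 \<in> K" using Kne by blast
  have "y0 \<in> (\<Union>g\<in>rho_group vs al. (\<lambda>x. g *v x) ` chamber al)"
    using y0 Kvin interior_subset unfolding vinberg_cone_def by blast
  then obtain ws0 x1 where x1: "x1 \<in> chamber al" "y0 = pw ws0 *v x1" unfolding group_eq by blast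
  have x1K: "x1 \<in> K" using Kpw[OF y0, of "rev ws0"] x1(2) pw_inv by simp
  obtain e where e: "0 < e" "ball x1 e \<subseteq> K" using Kop x1K open_contains_ball by blast
  obtain zz where zz: "\<forall>t. al t \<bullet> zz = 1" using exists_neg_point by blast
  define del where "del = e / (2 * (norm zz + 1))"
  have "0 < 2 * (norm zz + 1)" by (simp add: add_nonneg_pos)
  then have del0: "0 < del" using e(1) unfolding del_def by (rule divide_pos_pos[rotated])
  define x0 where "x0 = x1 - del *\<^sub>R zz"
  have "norm (del *\<^sub>R zz) < e"
  proof -
    have "norm (del *\<^sub>R zz) = del * norm zz" using del0 by simp
    also have "\<dots> < e"
    proof -
      have p: "0 < 2 * (norm zz + 1)" by (simp add: add_nonneg_pos)
      have "norm zz / (2 * (norm zz + 1)) < 1" using p by simp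
      then have "e * (norm zz / (2 * (norm zz + 1))) < e * 1" using e by (intro mult_strict_left_mono)
      moreover have "del * norm zz = e * (norm zz / (2 * (norm zz + 1)))" by (simp add: del_def)
      ultimately show ?thesis by simp
    qed
    finally show ?thesis .
  qed
  then have x0K: "x0 \<in> K" using e(2) by (simp add: x0_def dist_norm subset_iff)
  have x0neg: "al t \<bullet> x0 < 0" for t
  proof -
    have "al t \<bullet> x1 \<le> 0" using x1(1) by (simp add: chamber_def)
    then show ?thesis using zz del0 by (simp add: x0_def inner_diff_right)
  qed
  have x0ch: "x0 \<in> chamber al" using x0neg by (simp add: chamber_def less_imp_le)
  have bx0: "beta \<bullet> x0 < 0" by (rule cone_strict[OF beta_c beta0]) (simp add: x0neg)
  have ax0: "a \<bullet> x0 \<le> 0" using a_norm x0ch x0K by blast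
  have mupos: "0 < mu"
  proof (rule ccontr)
    assume "\<not> 0 < mu"
    then have "0 \<le> mu * (a \<bullet> x0)" using ax0 by (simp add: mult_nonpos_nonpos)
    then show False using bx0 mu(2) by simp
  qed
  have RR: "R ** R = mat 1" unfolding R_eq by (rule refl_invol[OF a_v])
  have dR: "dual_mat R = refl_mat a v"
    unfolding dual_mat_def matrix_inv_eq[OF RR RR] unfolding R_eq by (rule transpose_refl)
  have outer2: "outer a' v' = outer a v" using Rd_eq dR unfolding refl_mat_def by simp
  have a0: "a \<noteq> 0" and v0: "v \<noteq> 0" using a_v by auto
  obtain lam where lam: "a' = lam *\<^sub>R a" "v = lam *\<^sub>R v'" using outer_scalar[OF outer2 a0 v0] by blast
  have lam0: "lam \<noteq> 0" using lam(2) v0 by auto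
  have "pw (rev hs @ s # hs) = pw (rev hs) ** r s ** pw hs" by (simp add: pw_append matrix_mul_assoc)
  then have Rgrp: "R \<in> rho_group vs al" unfolding group_eq Rh by (metis rangeI)
  have RK: "R *v y \<in> K" if "y \<in> K" for y using Kinv Rgrp that by blast
  have Rmv: "R *v y = y - (a \<bullet> y) *\<^sub>R v" for y unfolding R_eq by (rule refl_mv)
  define c0 where "c0 = (1/2) *\<^sub>R y0 + (1/2) *\<^sub>R (R *v y0)"
  have c0K: "c0 \<in> K" unfolding c0_def by (rule convexD[OF Kcv y0 RK[OF y0]]) auto
  have ac0: "a \<bullet> c0 = 0"
  proof -
    have "a \<bullet> (R *v y0) = a \<bullet> y0 - (a \<bullet> y0) * 2" using a_v by (simp add: Rmv inner_diff_right)
    then show ?thesis by (simp add: c0_def inner_add_right)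
  qed
  have Rcl: "\<forall>z\<in>closure K. z - (a \<bullet> z) *\<^sub>R v \<in> closure K"
  proof
    fix z assume z: "z \<in> closure K"
    have cont: "continuous_on (closure K) (\<lambda>y. R *v y)"
      by (rule linear_continuous_on) (simp add: linear_conv_bounded_linear[symmetric])
    have "(\<lambda>y. R *v y) ` K \<subseteq> closure K" using RK closure_subset by blast
    then have "(\<lambda>y. R *v y) ` closure K \<subseteq> closure K"
      by (rule image_closure_subset[OF cont closed_closure])
    then have "R *v z \<in> closure K" using z by blast
    then show "z - (a \<bullet> z) *\<^sub>R v \<in> closure K" unfolding Rmv .
  qed
  have nv: "v \<notin> closure K \<and> - v \<notin> closure K"
  proof (rule ccontr)
    assume "\<not> ?thesis"
    then have "v \<in> closure K \<or> - v \<in> closure K" by blast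
    have e1: "v - (a \<bullet> v) *\<^sub>R v = - v" using a_v by (simp add: scaleR_2)
    have e2: "- v - (a \<bullet> (- v)) *\<^sub>R v = v" using a_v by (simp add: scaleR_2)
    have both: "v \<in> closure K \<and> - v \<in> closure K"
    proof (cases "v \<in> closure K")
      case True
      then have "v - (a \<bullet> v) *\<^sub>R v \<in> closure K" using Rcl by blast
      then have "- v \<in> closure K" using e1 by simp
      then show ?thesis using True by blast
    next
      case False
      then have "- v \<in> closure K" using \<open>v \<in> closure K \<or> - v \<in> closure K\<close> by blast
      then have "- v - (a \<bullet> (- v)) *\<^sub>R v \<in> closure K" using Rcl by blast
      then have "v \<in> closure K" using e2 by simp
      then show ?thesis using \<open>- v \<in> closure K\<close> by blast
    qed
    then have both: "v \<in> closure K" "- v \<in> closure K" by auto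
    have line: "\<forall>y\<in>K. \<forall>t::real. y + t *\<^sub>R v \<in> K"
    proof (intro ballI allI)
      fix y t assume y: "y \<in> K"
      show "y + t *\<^sub>R v \<in> K"
      proof (cases "0 < t")
        case True
        have "y + t *\<^sub>R v \<in> K" by (rule add_closure[OF Kop Kcv Kcone y closure_cone[OF Kcone both(1) True]])
        then show ?thesis .
      next
        case False
        show ?thesis
        proof (cases "t = 0")
          case True then show ?thesis using y by simp
        next
          case False
          then have "0 < - t" using \<open>\<not> 0 < t\<close> by simp
          have "y + (- t) *\<^sub>R (- v) \<in> K"
            by (rule add_closure[OF Kop Kcv Kcone y closure_cone[OF Kcone both(2) \<open>0 < - t\<close>]])
          then show ?thesis by simp
        qed
      qed
    qed
    show False by (rule PL[OF irred Kop Kcv Kne K0 Kinv v0 line])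
  qed
  have LHS: "half_cone_pos K v a = {c + t *\<^sub>R v | c t. c \<in> K \<and> a \<bullet> c = 0 \<and> 0 < t}"
    unfolding half_cone_pos_def by (rule HC[OF Kop Kcv Kcone]) (simp add: a_v)
  have DLe: "dual_cone (half_cone_pos K v a) = {c - t *\<^sub>R a | c t. c \<in> dual_cone K \<and> v \<bullet> c = 0 \<and> 0 < t}"
    unfolding LHS by (rule DL[OF Kop Kcv Kcone a_v c0K ac0 Rcl]) (use nv in auto)
  have RHS: "half_cone_neg (dual_cone K) a' v' = {c + t *\<^sub>R (- a') | c t. c \<in> dual_cone K \<and> v' \<bullet> c = 0 \<and> 0 < t}"
    unfolding half_cone_neg_def
    by (rule HC[OF open_dual[OF Kcone] convex_dual cone_dual]) (simp add: v'_a')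
  show ?thesis
  proof (cases "dual_cone K = {}")
    case True
    then show ?thesis unfolding DLe RHS by simp
  next
    case False
    then obtain w0 where w0: "w0 \<in> dual_cone K" by blast
    obtain s0 t0 :: 's where st: "s0 \<noteq> t0" using card2[OF infin] by blast
    obtain p where p: "\<forall>s. 0 \<le> p s" "\<forall>t. (\<Sum>s\<in>UNIV. p s * cartan vs al s t) < 0"
      using NT[OF irred st] by blast
    define phi where "phi = (\<Sum>s\<in>UNIV. p s *\<^sub>R al s)"
    have phit: "vs t \<bullet> phi < 0" for t
      using p(2) by (simp add: phi_def inner_sum_right cartan_def inner_commute)
    have phiK: "phi \<bullet> y \<le> 0" if "y \<in> K" for y
    proof -
      have "y \<in> (\<Union>g\<in>rho_group vs al. (\<lambda>x. g *v x) ` chamber al)"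
        using that Kvin interior_subset unfolding vinberg_cone_def by blast
      then obtain g x where "g \<in> rho_group vs al" "x \<in> chamber al" "y = g *v x" by blast
      then show ?thesis using phi_neg[OF p] unfolding phi_def by blast
    qed
    have phicl: "phi \<bullet> y \<le> 0" if "y \<in> closure K" for y
    proof -
      have "closure K \<subseteq> {y. phi \<bullet> y \<le> 0}"
        by (rule closure_minimal) (use phiK closed_halfspace_le in auto)
      then show ?thesis using that by blast
    qed
    define M where "M = 1 + (\<Sum>t\<in>UNIV. \<bar>vs t \<bullet> w0\<bar> / (- (vs t \<bullet> phi)))"
    have nn: "0 \<le> \<bar>vs x \<bullet> w0\<bar> / (- (vs x \<bullet> phi))" for x
      using phit[of x] by (intro divide_nonneg_pos) auto
    have Mt: "\<bar>vs t \<bullet> w0\<bar> / (- (vs t \<bullet> phi)) + 1 \<le> M" for t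
    proof -
      have "\<bar>vs t \<bullet> w0\<bar> / (- (vs t \<bullet> phi)) \<le> (\<Sum>t\<in>UNIV. \<bar>vs t \<bullet> w0\<bar> / (- (vs t \<bullet> phi)))"
        by (intro member_le_sum nn) auto
      then show ?thesis by (simp add: M_def)
    qed
    have M0: "0 < M" using Mt[of s0] nn[of s0] by linarith
    define u where "u = M *\<^sub>R phi + w0"
    have ut: "vs t \<bullet> u < 0" for t
    proof -
      define q where "q = - (vs t \<bullet> phi)"
      have q0: "0 < q" using phit by (simp add: q_def)
      have "(\<bar>vs t \<bullet> w0\<bar> / q + 1) * q \<le> M * q" using Mt[of t] q0 by (simp add: q_def mult_right_mono)
      then have "\<bar>vs t \<bullet> w0\<bar> + q \<le> M * q" using q0 by (simp add: algebra_simps)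
      then have "vs t \<bullet> w0 + q \<le> M * q" by linarith
      then have "vs t \<bullet> w0 < M * q" using q0 by linarith
      then show ?thesis by (simp add: u_def inner_add_right q_def)
    qed
    have uK: "u \<in> dual_cone K" unfolding dual_cone_def
    proof (intro CollectI ballI)
      fix z assume z: "z \<in> closure K - {0}"
      have "w0 \<bullet> z < 0" using w0 z unfolding dual_cone_def by blast
      moreover have "M * (phi \<bullet> z) \<le> 0" using phicl[of z] z M0 by (simp add: mult_nonneg_nonpos)
      ultimately show "u \<bullet> z < 0" by (simp add: u_def inner_add_left)
    qed
    have uch: "u \<in> chamber vs" using ut by (simp add: chamber_def less_imp_le)
    have v'u: "v' \<bullet> u \<le> 0" using v'_norm uch uK by blast
    have gu: "gam \<bullet> u < 0" by (rule cone_strict[OF gam_c gam0]) (simp add: ut)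
    have "v \<bullet> u = mu * (gam \<bullet> u)" using mu(1) by simp
    then have vu: "v \<bullet> u < 0" using mupos gu by (simp add: mult_pos_neg)
    have "lam * (v' \<bullet> u) < 0" using vu lam(2) by simp
    then have lampos: "0 < lam"
    proof -
      assume h: "lam * (v' \<bullet> u) < 0"
      show "0 < lam"
      proof (rule ccontr)
        assume "\<not> 0 < lam"
        then have "0 \<le> lam * (v' \<bullet> u)" using v'u by (simp add: mult_nonpos_nonpos)
        then show False using h by simp
      qed
    qed
    have "{c + t *\<^sub>R (- a') | c t. c \<in> dual_cone K \<and> v' \<bullet> c = 0 \<and> 0 < t} =
          {c - t *\<^sub>R a | c t. c \<in> dual_cone K \<and> v \<bullet> c = 0 \<and> 0 < t}"
    proof -
      have vc: "v' \<bullet> c = 0 \<longleftrightarrow> v \<bullet> c = 0" for c using lam(2) lam0 by simp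
      show ?thesis
      proof (intro set_eqI iffI)
        fix w assume "w \<in> {c + t *\<^sub>R (- a') | c t. c \<in> dual_cone K \<and> v' \<bullet> c = 0 \<and> 0 < t}"
        then obtain c t where ct: "c \<in> dual_cone K" "v' \<bullet> c = 0" "0 < t" "w = c + t *\<^sub>R (- a')" by blast
        have "w = c - (t * lam) *\<^sub>R a" using ct(4) lam(1) by simp
        moreover have "0 < t * lam" using ct(3) lampos by simp
        ultimately show "w \<in> {c - t *\<^sub>R a | c t. c \<in> dual_cone K \<and> v \<bullet> c = 0 \<and> 0 < t}"
          using ct vc by blast
      next
        fix w assume "w \<in> {c - t *\<^sub>R a | c t. c \<in> dual_cone K \<and> v \<bullet> c = 0 \<and> 0 < t}"
        then obtain c t where ct: "c \<in> dual_cone K" "v \<bullet> c = 0" "0 < t" "w = c - t *\<^sub>R a" by blast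
        have "w = c + (t / lam) *\<^sub>R (- a')" using ct(4) lam(1) lam0 by simp
        moreover have "0 < t / lam" using ct(3) lampos by simp
        ultimately show "w \<in> {c + t *\<^sub>R (- a') | c t. c \<in> dual_cone K \<and> v' \<bullet> c = 0 \<and> 0 < t}"
          using ct vc by blast
      qed
    qed
    then show ?thesis unfolding DLe RHS by simp
  qed
qed


end
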